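(* Let $G=(V,E)$ be a graph on $n$ vertices $v_1,\dots,v_n$ and let $k$ be a positive integer. Let $v\in V$ be such that its neighbourhood $N(v)$ induces a clique of size at most $k-2$. For any choice of positive parameters $(p_1,\dots,p_n)$, the Glauber dynamics $\mathcal{L}_V$ for $k$-colourings of $G$ and the Glauber dynamics $\mathcal{L}_{V\setminus\{v\}}$ for $k$-colourings of $G-v$ (the subgraph induced by $V\setminus\{v\}$), defined with the same parameters, satisfy $\tau(\mathcal{L}_{V\setminus\{v\}})\leq\tau(\mathcal{L}_V)$.
   Context: The continuous-time Glauber dynamics for proper $k$-vertex-colourings of a graph with parameters $(p_i)$ is the chain on the set of proper colourings with rate $p_i$ from $\sigma$ to $\eta$ whenever $\sigma,\eta$ differ exactly at vertex $v_i$, and rate $0$ otherwise. The relaxation time is $\tau=1/\mathrm{Gap}$, where $\mathrm{Gap}$ is the second smallest eigenvalue of minus the generator. *)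

theory Defs
  imports "Jordan_Normal_Form.Char_Poly" "HOL-Computational_Algebra.Polynomial_Factorial"
    "HOL-Library.Extended_Real"
begin

(* Graphs: vertex set W :: nat set, symmetric irreflexive edge relation E.
   Vertex v_i is the natural number i; the graph G has vertex set {0..<n}. *)

definition proper_colourings :: "(nat \<Rightarrow> nat \<Rightarrow> bool) \<Rightarrow> nat set \<Rightarrow> nat \<Rightarrow> (nat \<Rightarrow> nat) set" where
  "proper_colourings E W k =
     {\<sigma>. (\<forall>x\<in>W. \<sigma> x < k) \<and> (\<forall>x. x \<notin> W \<longrightarrow> \<sigma> x = 0)
          \<and> (\<forall>x\<in>W. \<forall>y\<in>W. E x y \<longrightarrow> \<sigma> x \<noteq> \<sigma> y)}"

definition glauber_rate :: "(nat \<Rightarrow> real) \<Rightarrow> nat set \<Rightarrow> (nat \<Rightarrow> nat) \<Rightarrow> (nat \<Rightarrow> nat) \<Rightarrow> real" where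
  "glauber_rate p W \<sigma> \<eta> =
     (if \<exists>x\<in>W. {y. \<sigma> y \<noteq> \<eta> y} = {x} then p (THE x. {y. \<sigma> y \<noteq> \<eta> y} = {x}) else 0)"

definition glauber_generator :: "(nat \<Rightarrow> nat \<Rightarrow> bool) \<Rightarrow> nat set \<Rightarrow> nat \<Rightarrow> (nat \<Rightarrow> real)
     \<Rightarrow> (nat \<Rightarrow> nat) \<Rightarrow> (nat \<Rightarrow> nat) \<Rightarrow> real" where
  "glauber_generator E W k p \<sigma> \<eta> =
     (if \<sigma> = \<eta> then - (\<Sum>\<zeta>\<in>proper_colourings E W k - {\<sigma>}. glauber_rate p W \<sigma> \<zeta>)
      else glauber_rate p W \<sigma> \<eta>)"

definition state_list :: "(nat \<Rightarrow> nat \<Rightarrow> bool) \<Rightarrow> nat set \<Rightarrow> nat \<Rightarrow> (nat \<Rightarrow> nat) list" where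
  "state_list E W k = (SOME xs. distinct xs \<and> set xs = proper_colourings E W k)"

definition minus_generator_mat :: "(nat \<Rightarrow> nat \<Rightarrow> bool) \<Rightarrow> nat set \<Rightarrow> nat \<Rightarrow> (nat \<Rightarrow> real) \<Rightarrow> real mat" where
  "minus_generator_mat E W k p =
     (let xs = state_list E W k
      in mat (length xs) (length xs) (\<lambda>(i, j). - glauber_generator E W k p (xs ! i) (xs ! j)))"

(* eigenvalues with multiplicity, in increasing order
   (the matrix is real symmetric, so all roots of its characteristic polynomial are real) *)
definition sorted_eigenvalues :: "real mat \<Rightarrow> real list" where
  "sorted_eigenvalues A = sorted_list_of_multiset (proots (char_poly A))"

definition glauber_gap :: "(nat \<Rightarrow> nat \<Rightarrow> bool) \<Rightarrow> nat set \<Rightarrow> nat \<Rightarrow> (nat \<Rightarrow> real) \<Rightarrow> real" where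
  "glauber_gap E W k p = sorted_eigenvalues (minus_generator_mat E W k p) ! 1"

definition relaxation_time :: "(nat \<Rightarrow> nat \<Rightarrow> bool) \<Rightarrow> nat set \<Rightarrow> nat \<Rightarrow> (nat \<Rightarrow> real) \<Rightarrow> ereal" where
  "relaxation_time E W k p =
     (if card (proper_colourings E W k) < 2 then 0
      else if glauber_gap E W k p = 0 then \<infinity>
      else ereal (1 / glauber_gap E W k p))"

definition neighbourhood :: "(nat \<Rightarrow> nat \<Rightarrow> bool) \<Rightarrow> nat set \<Rightarrow> nat \<Rightarrow> nat set" where
  "neighbourhood E W v = {u\<in>W. E v u}"

definition is_clique :: "(nat \<Rightarrow> nat \<Rightarrow> bool) \<Rightarrow> nat set \<Rightarrow> bool" where
  "is_clique E C = (\<forall>a\<in>C. \<forall>b\<in>C. a \<noteq> b \<longrightarrow> E a b)"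

end

theory Submission
  imports Defs "Jordan_Normal_Form.Schur_Decomposition"
begin

lemma sym_mat_real_eigenvalue:
  fixes A :: "real mat" and z :: complex
  assumes A: "A \<in> carrier_mat n n" and sym: "transpose_mat A = A"
    and root: "poly (char_poly (map_mat complex_of_real A)) z = 0"
  shows "z \<in> \<real>"
proof -
  let ?A = "map_mat complex_of_real A"
  have A': "?A \<in> carrier_mat n n" using A by auto
  have "eigenvalue ?A z" using eigenvalue_root_char_poly[OF A'] root by simp
  then obtain w where ev: "eigenvector ?A w z" unfolding eigenvalue_def by blast
  hence w: "w \<in> carrier_vec n" and w0: "w \<noteq> 0\<^sub>v n" and Aw: "?A *\<^sub>v w = z \<cdot>\<^sub>v w"
    using A unfolding eigenvector_def by auto
  have symA: "A $$ (i,j) = A $$ (j,i)" if "i < n" "j < n" for i j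
    using sym that A by (metis carrier_matD(1) carrier_matD(2) index_transpose_mat(1))
  have comp: "(\<Sum>j<n. of_real (A $$ (i,j)) * w $ j) = z * w $ i" if i: "i < n" for i
  proof -
    have "(?A *\<^sub>v w) $ i = z * w $ i" using Aw i w by simp
    moreover have "(?A *\<^sub>v w) $ i = (\<Sum>j<n. of_real (A $$ (i,j)) * w $ j)"
      using i A w by (auto simp: scalar_prod_def row_def lessThan_atLeast0 intro!: sum.cong)
    ultimately show ?thesis by simp
  qed
  define s where "s = (\<Sum>i<n. cnj (w $ i) * (\<Sum>j<n. of_real (A $$ (i,j)) * w $ j))"
  define t where "t = (\<Sum>i<n. cnj (w $ i) * w $ i)"
  have st: "s = z * t" unfolding s_def t_def using comp
    by (simp add: sum_distrib_left mult.commute mult.left_commute)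
  have cs: "cnj s = (\<Sum>i<n. w $ i * (\<Sum>j<n. of_real (A $$ (i,j)) * cnj (w $ j)))"
    unfolding s_def by (simp add: sum_distrib_left)
  also have "\<dots> = (\<Sum>i<n. \<Sum>j<n. w $ i * of_real (A $$ (i,j)) * cnj (w $ j))"
    by (simp add: sum_distrib_left mult.assoc)
  also have "\<dots> = (\<Sum>j<n. \<Sum>i<n. w $ i * of_real (A $$ (i,j)) * cnj (w $ j))"
    by (rule sum.swap)
  also have "\<dots> = (\<Sum>j<n. \<Sum>i<n. cnj (w $ j) * (of_real (A $$ (j,i)) * w $ i))"
    by (intro sum.cong refl, simp add: symA mult.commute mult.left_commute)
  also have "\<dots> = s" unfolding s_def by (simp add: sum_distrib_left)
  finally have cs: "cnj s = s" .
  have tpos: "t \<noteq> 0"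
  proof
    assume t0: "t = 0"
    have "t = of_real (\<Sum>i<n. (cmod (w $ i))^2)"
      unfolding t_def of_real_sum by (intro sum.cong refl, simp only: complex_norm_square mult.commute)
    hence "(\<Sum>i<n. (cmod (w $ i))^2) = 0" using t0 by (metis of_real_eq_0_iff)
    hence "\<forall>i\<in>{..<n}. (cmod (w $ i))^2 = 0" by (subst (asm) sum_nonneg_eq_0_iff) auto
    hence "w = 0\<^sub>v n" using w by (intro eq_vecI) auto
    thus False using w0 by simp
  qed
  have ct: "cnj t = t" unfolding t_def by (simp add: mult.commute)
  have "cnj z * t = z * t" using cs st ct by (metis complex_cnj_mult)
  hence "cnj z = z" using tpos by simp
  thus ?thesis using Reals_cnj_iff by metis
qed

interpretation rh: map_poly_inj_idom_hom "of_real :: real \<Rightarrow> complex" ..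

lemma sym_char_poly_split:
  fixes A :: "real mat"
  assumes A: "A \<in> carrier_mat n n" and sym: "transpose_mat A = A"
  shows "\<exists>es. char_poly A = (\<Prod>e\<leftarrow>es. [:-e, 1:])"
proof -
  define pc where "pc = map_poly complex_of_real (char_poly A)"
  have pc: "pc = char_poly (map_mat complex_of_real A)"
    unfolding pc_def using of_real_hom.char_poly_hom[OF A, where 'a=complex] by metis
  have lc: "lead_coeff pc = 1"
    using degree_monic_char_poly[of "map_mat complex_of_real A" n] A unfolding pc by auto
  obtain rs where rs: "mset rs = proots pc" using ex_mset by blast
  have "pc = Polynomial.smult (lead_coeff pc) (\<Prod>x\<in>#proots pc. [:-x, 1:])"
    by (rule complex_poly_decompose_multiset [symmetric])
  also have "\<dots> = (\<Prod>x\<leftarrow>rs. [:-x, 1:])"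
    unfolding lc by (subst prod_mset_prod_list [symmetric]) (simp add: rs[symmetric])
  finally have pcrs: "pc = (\<Prod>x\<leftarrow>rs. [:-x, 1:])" .
  have real: "x = of_real (Re x)" if x: "x \<in> set rs" for x
  proof -
    have "poly pc x = 0" unfolding pcrs poly_prod_list using x
      by (auto simp: prod_list_zero_iff)
    hence "x \<in> \<real>" using sym_mat_real_eigenvalue[OF A sym] unfolding pc by blast
    thus ?thesis by (simp add: complex_is_Real_iff complex_eq_iff)
  qed
  define es where "es = map Re rs"
  have "map_poly complex_of_real (\<Prod>e\<leftarrow>es. [:-e, 1:]) = (\<Prod>e\<leftarrow>es. [:-complex_of_real e, 1:])"
    by (simp add: rh.hom_prod_list o_def)
  also have "\<dots> = (\<Prod>x\<leftarrow>rs. [:-x, 1:])" unfolding es_def o_def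
    by (simp add: o_def) (metis (no_types, lifting) map_eq_conv real)
  finally have "map_poly complex_of_real (\<Prod>e\<leftarrow>es. [:-e, 1:]) = map_poly complex_of_real (char_poly A)"
    using pcrs pc_def by simp
  hence "char_poly A = (\<Prod>e\<leftarrow>es. [:-e, 1:])" by (simp add: rh.eq_iff)
  thus ?thesis by blast
qed

definition diagm :: "nat \<Rightarrow> real list \<Rightarrow> real mat" where
  "diagm n es = mat n n (\<lambda>(i,j). if i = j then es ! i else 0)"

lemma conjugate_real_vec[simp]: "conjugate (v :: real vec) = v"
  by (intro eq_vecI) (auto simp: conjugate_vec_def)

lemma self_sprod_real: "(v :: real vec) \<bullet> v = (\<Sum>i<dim_vec v. (v $ i)^2)"
  unfolding scalar_prod_def by (simp add: power2_eq_square lessThan_atLeast0)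

lemma self_sprod_pos:
  assumes "(v :: real vec) \<in> carrier_vec n" "v \<noteq> 0\<^sub>v n"
  shows "v \<bullet> v > 0"
proof -
  have ge: "v \<bullet> v \<ge> 0" unfolding self_sprod_real by (intro sum_nonneg) auto
  have "v \<bullet> v \<noteq> 0"
  proof
    assume "v \<bullet> v = 0"
    hence "\<forall>i\<in>{..<dim_vec v}. (v $ i)^2 = 0" unfolding self_sprod_real
      by (subst (asm) sum_nonneg_eq_0_iff) auto
    hence "v = 0\<^sub>v n" using assms(1) by (intro eq_vecI) auto
    thus False using assms by simp
  qed
  thus ?thesis using ge by simp
qed

definition nrm :: "real vec \<Rightarrow> real vec" where
  "nrm w = (1 / sqrt (w \<bullet> w)) \<cdot>\<^sub>v w"

lemma nrm_carrier[simp]: "w \<in> carrier_vec n \<Longrightarrow> nrm w \<in> carrier_vec n"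
  unfolding nrm_def by simp

lemma nrm_sprod:
  assumes w: "w \<in> carrier_vec n" "u \<in> carrier_vec n"
  shows "nrm w \<bullet> nrm u = (w \<bullet> u) / (sqrt (w \<bullet> w) * sqrt (u \<bullet> u))"
  unfolding nrm_def using w by simp

lemma nrm_self:
  assumes w: "w \<in> carrier_vec n" "w \<bullet> w > 0"
  shows "nrm w \<bullet> nrm w = 1"
proof -
  have "sqrt (w \<bullet> w) * sqrt (w \<bullet> w) = w \<bullet> w" using w(2) by simp
  thus ?thesis using nrm_sprod[OF w(1) w(1)] w(2) by simp
qed

lemma nrm_id: "w \<bullet> w = 1 \<Longrightarrow> nrm w = w"
  unfolding nrm_def by simp

lemma quad_entry:
  assumes W: "W \<in> carrier_mat n n" and A: "A \<in> carrier_mat n n" and i: "i < n" and j: "j < n"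
  shows "(transpose_mat W * A * W) $$ (i,j) = col W i \<bullet> (A *\<^sub>v col W j)"
proof -
  have "transpose_mat W * A * W = transpose_mat W * (A * W)"
    using W A by (intro assoc_mult_mat) auto
  thus ?thesis using W A i j by (simp add: col_mult2[of _ n n] mult_mat_vec_def)
qed

lemma char_poly_1x1: "char_poly (mat 1 1 (\<lambda>_. e)) = [:- (e::real), 1:]"
  by (simp add: char_poly_defs det_def sign_def)

lemma spectral_ind:
  fixes A :: "real mat"
  assumes "A \<in> carrier_mat n n" "transpose_mat A = A" "char_poly A = (\<Prod>e\<leftarrow>es. [:-e, 1:])"
  shows "\<exists>U. U \<in> carrier_mat n n \<and> transpose_mat U * U = 1\<^sub>m n \<and> transpose_mat U * A * U = diagm n es"
  using assms
proof (induction es arbitrary: n A)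
  case Nil
  hence "n = 0" using degree_monic_char_poly[OF Nil(1)] by simp
  thus ?case using Nil(1) by (intro exI[of _ "1\<^sub>m 0"]) (auto intro!: eq_matI simp: diagm_def)
next
  case (Cons e es n A)
  note A = Cons(2) and sym = Cons(3) and cp = Cons(4)
  have deg: "degree (char_poly A) = Suc (degree (\<Prod>e \<leftarrow> es. [:- e, 1:]))" unfolding cp list.map prod_list.Cons
    by (subst degree_mult_eq) (auto simp: prod_list_zero_iff)
  with degree_monic_char_poly[OF A] have n: "n \<noteq> 0" by auto
  have "eigenvalue A e" unfolding eigenvalue_root_char_poly[OF A] cp by simp
  then obtain v0 where ev: "eigenvector A v0 e" unfolding eigenvalue_def by blast
  hence v0: "v0 \<in> carrier_vec n" "v0 \<noteq> 0\<^sub>v n" and Av0: "A *\<^sub>v v0 = e \<cdot>\<^sub>v v0"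
    using A unfolding eigenvector_def by auto
  define v where "v = nrm v0"
  have v: "v \<in> carrier_vec n" unfolding v_def using v0 by simp
  have vv: "v \<bullet> v = 1" unfolding v_def by (rule nrm_self[OF v0(1) self_sprod_pos[OF v0]])
  have vnz: "v \<noteq> 0\<^sub>v n" using vv v by auto
  have Av: "A *\<^sub>v v = e \<cdot>\<^sub>v v" unfolding v_def nrm_def using A v0 Av0
    by (simp add: mult_mat_vec smult_smult_assoc mult.commute)
  interpret cof_vec_space n "TYPE(real)" .
  define b where "b = basis_completion v"
  from basis_completion[OF v vnz, folded b_def]
  have dist_b: "distinct b" and indep: "\<not> lin_dep (set b)" and b: "set b \<subseteq> carrier_vec n"
    and hdb: "hd b = v" and len_b: "length b = n" by auto
  from hdb len_b n obtain vs where bv: "b = v # vs" by (cases b, auto)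
  define ws where "ws = gram_schmidt n b"
  from gram_schmidt_result[OF b dist_b indep refl, folded ws_def]
  have ws: "set ws \<subseteq> carrier_vec n" "corthogonal ws" "length ws = n"
    by (auto simp: len_b)
  from gram_schmidt_hd[OF v, of vs, folded bv] have hdws: "hd ws = v" unfolding ws_def .
  define ws' where "ws' = map nrm ws"
  have ws'c: "ws' ! i \<in> carrier_vec n" if "i < n" for i
    using ws that unfolding ws'_def by (auto intro!: nrm_carrier)
  have len': "length ws' = n" using ws unfolding ws'_def by simp
  have orth: "ws' ! i \<bullet> ws' ! j = (if i = j then 1 else 0)" if i: "i < n" and j: "j < n" for i j
  proof -
    have wi: "ws ! i \<in> carrier_vec n" and wj: "ws ! j \<in> carrier_vec n" using ws i j by auto
    have c0: "ws ! i \<bullet>c ws ! j = 0 \<longleftrightarrow> i \<noteq> j"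
      by (rule corthogonalD[OF ws(2)]) (use ws(3) i j in auto)
    have c: "ws ! i \<bullet> ws ! j = 0 \<longleftrightarrow> i \<noteq> j" using c0 by (simp only: conjugate_real_vec)
    have ni: "ws' ! i = nrm (ws ! i)" and nj: "ws' ! j = nrm (ws ! j)"
      unfolding ws'_def using ws(3) i j by auto
    show ?thesis
    proof (cases "i = j")
      case True
      have "ws ! i \<bullet> ws ! i \<noteq> 0" using c True by simp
      moreover have "ws ! i \<bullet> ws ! i \<ge> 0" unfolding self_sprod_real by (intro sum_nonneg) auto
      ultimately have "ws ! i \<bullet> ws ! i > 0" by linarith
      thus ?thesis using True nrm_self[OF wi] ni by simp
    next
      case False
      hence "ws ! i \<bullet> ws ! j = 0" using c by simp
      thus ?thesis using False nrm_sprod[OF wi wj] ni nj by simp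
    qed
  qed
  have hd': "ws' ! 0 = v" using hdws n ws(3) vv unfolding ws'_def
    by (metis hd_conv_nth length_0_conv nrm_id nth_map gr0I)
  define W where "W = mat_of_cols n ws'"
  have W: "W \<in> carrier_mat n n" unfolding W_def using mat_of_cols_carrier(1)[of n ws'] len' by simp
  have colW: "col W i = ws' ! i" if "i < n" for i
    unfolding W_def using that len' ws'c by simp
  have WW: "transpose_mat W * W = 1\<^sub>m n"
    by (rule eq_matI) (use W in \<open>auto simp: colW orth\<close>)
  have WW': "W * transpose_mat W = 1\<^sub>m n"
    using mat_mult_left_right_inverse[OF _ W WW] W by auto
  define A' where "A' = transpose_mat W * A * W"
  have A'c: "A' \<in> carrier_mat n n" unfolding A'_def using W A by auto
  have A'e: "A' $$ (i,j) = col W i \<bullet> (A *\<^sub>v col W j)" if "i < n" "j < n" for i j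
    unfolding A'_def using quad_entry[OF W A that] .
  have A'sym: "A' $$ (i,j) = A' $$ (j,i)" if i: "i < n" and j: "j < n" for i j
  proof -
    have ci: "col W i \<in> carrier_vec n" and cj: "col W j \<in> carrier_vec n" using W i j by auto
    have "col W i \<bullet> (A *\<^sub>v col W j) = (transpose_mat A *\<^sub>v col W i) \<bullet> col W j"
      using transpose_vec_mult_scalar[OF A cj ci] by simp
    also have "\<dots> = col W j \<bullet> (A *\<^sub>v col W i)" using sym comm_scalar_prod[OF _ cj, of _ ] A ci
      by (metis mult_mat_vec_carrier)
    finally show ?thesis using A'e i j by simp
  qed
  have A'0: "A' $$ (i,0) = (if i = 0 then e else 0)" if i: "i < n" for i
  proof -
    have "A' $$ (i,0) = ws' ! i \<bullet> (e \<cdot>\<^sub>v v)" using A'e[OF i] n colW i Av hd' by simp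
    also have "\<dots> = e * (ws' ! i \<bullet> ws' ! 0)" using ws'c[OF i] v hd' by simp
    finally show ?thesis using orth[OF i] n by simp
  qed
  define A3 where "A3 = mat (n-1) (n-1) (\<lambda>(i,j). A' $$ (Suc i, Suc j))"
  have A3c: "A3 \<in> carrier_mat (n-1) (n-1)" unfolding A3_def by simp
  have A'block: "A' = four_block_mat (mat 1 1 (\<lambda>_. e)) (0\<^sub>m 1 (n-1)) (0\<^sub>m (n-1) 1) A3"
  proof (rule eq_matI)
    fix i j assume i: "i < dim_row (four_block_mat (mat 1 1 (\<lambda>_. e)) (0\<^sub>m 1 (n-1)) (0\<^sub>m (n-1) 1) A3)"
      and j: "j < dim_col (four_block_mat (mat 1 1 (\<lambda>_. e)) (0\<^sub>m 1 (n-1)) (0\<^sub>m (n-1) 1) A3)"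
    hence i: "i < n" and j: "j < n" using n A3c by auto
    show "A' $$ (i, j) = four_block_mat (mat 1 1 (\<lambda>_. e)) (0\<^sub>m 1 (n-1)) (0\<^sub>m (n-1) 1) A3 $$ (i, j)"
      using i j n A3c A'0 A'sym[of 0 j] unfolding A3_def
      by (cases i; cases j; auto)
  qed (use A'c A3c n in auto)
  have "similar_mat_wit A' A (transpose_mat W) W"
    unfolding similar_mat_wit_def Let_def using A'c A W WW WW' unfolding A'_def by auto
  hence "char_poly A' = char_poly A" using char_poly_similar unfolding similar_mat_def by blast
  also have "char_poly A' = [:-e,1:] * char_poly A3"
    unfolding A'block by (subst char_poly_four_block_zeros_col[OF _ _ A3c]) (auto simp only: char_poly_1x1 mat_carrier zero_carrier_mat)
  finally have "[:-e,1:] * char_poly A3 = [:-e,1:] * (\<Prod>e\<leftarrow>es. [:-e, 1:])" using cp by (simp only: list.map prod_list.Cons)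
  hence "char_poly A3 = (\<Prod>e\<leftarrow>es. [:-e, 1:])" by (subst (asm) mult_cancel_left) simp
  moreover have "transpose_mat A3 = A3" unfolding A3_def using A'sym
    by (intro eq_matI) auto
  ultimately obtain U3 where U3: "U3 \<in> carrier_mat (n-1) (n-1)" and U3U3: "transpose_mat U3 * U3 = 1\<^sub>m (n-1)"
    and U3A: "transpose_mat U3 * A3 * U3 = diagm (n-1) es" using Cons.IH[OF A3c] by blast
  define Bm where "Bm = four_block_mat (1\<^sub>m 1) (0\<^sub>m 1 (n-1)) (0\<^sub>m (n-1) 1) U3"
  have Bmc: "Bm \<in> carrier_mat n n" unfolding Bm_def using U3 n by auto
  have BmT: "transpose_mat Bm = four_block_mat (1\<^sub>m 1) (0\<^sub>m 1 (n-1)) (0\<^sub>m (n-1) 1) (transpose_mat U3)"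
    unfolding Bm_def by (subst transpose_four_block_mat) (use U3 in auto)
  define U where "U = W * Bm"
  have Uc: "U \<in> carrier_mat n n" unfolding U_def using W Bmc by auto
  have UT: "transpose_mat U = transpose_mat Bm * transpose_mat W"
    unfolding U_def by (rule transpose_mult[OF W Bmc])
  have "transpose_mat U * U = (transpose_mat Bm * transpose_mat W) * (W * Bm)"
    unfolding UT by (simp add: U_def)
  also have "\<dots> = transpose_mat Bm * (transpose_mat W * W) * Bm"
    using W Bmc by (simp add: assoc_mult_mat[of _ n n _ n _ n])
  also have "\<dots> = transpose_mat Bm * Bm" unfolding WW using Bmc by simp
  also have "\<dots> = 1\<^sub>m n" unfolding BmT unfolding Bm_def
    by (subst mult_four_block_mat[where ?nr1.0=1 and ?n1.0=1 and ?nr2.0="n-1" and ?n2.0="n-1" and ?nc1.0=1 and ?nc2.0="n-1"]) (use U3 n U3U3 in \<open>auto simp: four_block_one_mat[of 1 "n-1", simplified] \<close>)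
  finally have UU: "transpose_mat U * U = 1\<^sub>m n" .
  have P1: "transpose_mat Bm * A' = four_block_mat (mat 1 1 (\<lambda>_. e)) (0\<^sub>m 1 (n-1)) (0\<^sub>m (n-1) 1) (transpose_mat U3 * A3)"
    unfolding BmT unfolding A'block
    by (subst mult_four_block_mat[where ?nr1.0=1 and ?n1.0=1 and ?nr2.0="n-1" and ?n2.0="n-1" and ?nc1.0=1 and ?nc2.0="n-1"])
      (use U3 A3c in auto)
  have P2: "transpose_mat Bm * A' * Bm = four_block_mat (mat 1 1 (\<lambda>_. e)) (0\<^sub>m 1 (n-1)) (0\<^sub>m (n-1) 1) (transpose_mat U3 * A3 * U3)"
    unfolding P1 unfolding Bm_def
    by (subst mult_four_block_mat[where ?nr1.0=1 and ?n1.0=1 and ?nr2.0="n-1" and ?n2.0="n-1" and ?nc1.0=1 and ?nc2.0="n-1"])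
      (use U3 A3c in auto)
  have "transpose_mat U * A * U = (transpose_mat Bm * transpose_mat W) * A * (W * Bm)"
    unfolding UT by (simp add: U_def)
  also have "\<dots> = transpose_mat Bm * A' * Bm"
    unfolding A'_def using W Bmc A by (simp add: assoc_mult_mat[of _ n n _ n _ n])
  also have "\<dots> = four_block_mat (mat 1 1 (\<lambda>_. e)) (0\<^sub>m 1 (n-1)) (0\<^sub>m (n-1) 1) (transpose_mat U3 * A3 * U3)"
    by (rule P2)
  also have "\<dots> = diagm n (e # es)" unfolding U3A
    by (rule eq_matI) (use n in \<open>auto simp: diagm_def nth_Cons'\<close>)
  finally show ?case using Uc UU by blast
qed

lemma proots_lin: "proots (\<Prod>e\<leftarrow>es. [:-e, 1:]) = mset (es :: real list)"
proof (induction es)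
  case (Cons a es)
  have "proots ([:-a, 1:] * (\<Prod>e\<leftarrow>es. [:-e, 1:])) = proots [:-a, 1:] + proots (\<Prod>e\<leftarrow>es. [:-e, 1:])"
    by (rule proots_mult) (auto simp: prod_list_zero_iff)
  also have "proots [:-a, 1:] = {#a#}" using proots_linear_factor[of "-a"] by simp
  finally show ?case using Cons by (simp only: list.map prod_list.Cons mset.simps) simp
qed simp

lemma spectral_sorted:
  fixes M :: "real mat"
  assumes M: "M \<in> carrier_mat n n" and sym: "transpose_mat M = M"
  shows "\<exists>U es. U \<in> carrier_mat n n \<and> transpose_mat U * U = 1\<^sub>m n \<and> U * transpose_mat U = 1\<^sub>m n
     \<and> M = U * diagm n es * transpose_mat U \<and> sorted es \<and> length es = n \<and> sorted_eigenvalues M = es"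
proof -
  obtain es0 where es0: "char_poly M = (\<Prod>e\<leftarrow>es0. [:-e, 1:])"
    using sym_char_poly_split[OF M sym] by blast
  define es where "es = sort es0"
  have "(\<Prod>e\<leftarrow>es. [:-e, 1:]) = (\<Prod>e\<leftarrow>es0. [:-e, 1:])"
    unfolding es_def
    by (simp only: prod_mset_prod_list[symmetric] mset_map mset_sort)
  hence cp: "char_poly M = (\<Prod>e\<leftarrow>es. [:-e, 1:])" using es0 by simp
  obtain U where U: "U \<in> carrier_mat n n" and UU: "transpose_mat U * U = 1\<^sub>m n"
    and UMU: "transpose_mat U * M * U = diagm n es"
    using spectral_ind[OF M sym cp] by blast
  have UU': "U * transpose_mat U = 1\<^sub>m n"
    using mat_mult_left_right_inverse[OF _ U UU] U by auto
  have "U * diagm n es * transpose_mat U = (U * transpose_mat U) * M * (U * transpose_mat U)"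
    unfolding UMU[symmetric] using U M by (simp add: assoc_mult_mat[of _ n n _ n _ n])
  also have "\<dots> = M" unfolding UU' using M by simp
  finally have Mdec: "M = U * diagm n es * transpose_mat U" by simp
  have len: "length es = n"
    using degree_monic_char_poly[OF M] unfolding cp degree_linear_factors by simp
  have "proots (char_poly M) = mset es"
    unfolding cp by (rule proots_lin)
  hence "sorted_eigenvalues M = es" unfolding sorted_eigenvalues_def es_def by simp
  thus ?thesis using U UU UU' Mdec len unfolding es_def by fastforce
qed

lemma diagm_mult_vec:
  assumes y: "y \<in> carrier_vec n"
  shows "diagm n es *\<^sub>v y = vec n (\<lambda>i. es ! i * y $ i)"
proof (rule eq_vecI)
  fix i assume "i < dim_vec (vec n (\<lambda>i. es ! i * y $ i))"
  hence i: "i < n" by simp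
  have "row (diagm n es) i \<bullet> y = (\<Sum>j\<in>{0..<n}. (if i = j then es ! i else 0) * y $ j)"
    unfolding scalar_prod_def diagm_def using i y by (intro sum.cong) auto
  also have "\<dots> = (\<Sum>j\<in>{0..<n}. if j = i then es ! i * y $ i else 0)"
    by (intro sum.cong) auto
  also have "\<dots> = es ! i * y $ i" using i by simp
  finally show "(diagm n es *\<^sub>v y) $ i = vec n (\<lambda>i. es ! i * y $ i) $ i"
    using i by (simp add: diagm_def)
qed (simp add: diagm_def)

lemma diagm_carrier[simp]: "diagm n es \<in> carrier_mat n n"
  unfolding diagm_def by simp

context
  fixes M U :: "real mat" and es :: "real list" and n :: nat
  assumes U: "U \<in> carrier_mat n n" and UU: "transpose_mat U * U = 1\<^sub>m n"
    and UU': "U * transpose_mat U = 1\<^sub>m n" and Mdec: "M = U * diagm n es * transpose_mat U"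
begin

lemma UT: "transpose_mat U \<in> carrier_mat n n" using U by simp

lemma UD: "U * diagm n es \<in> carrier_mat n n" using U by (intro mult_carrier_mat) auto

lemma Mc: "M \<in> carrier_mat n n" unfolding Mdec by (rule mult_carrier_mat[OF UD UT])

lemma UTv: "x \<in> carrier_vec n \<Longrightarrow> transpose_mat U *\<^sub>v x \<in> carrier_vec n"
  using UT by (intro mult_mat_vec_carrier)

lemma Uv: "x \<in> carrier_vec n \<Longrightarrow> U *\<^sub>v x \<in> carrier_vec n"
  using U by (intro mult_mat_vec_carrier)

lemma sp_pres: assumes x: "x \<in> carrier_vec n" and z: "z \<in> carrier_vec n"
  shows "(transpose_mat U *\<^sub>v x) \<bullet> (transpose_mat U *\<^sub>v z) = x \<bullet> z"
proof -
  have "(transpose_mat U *\<^sub>v x) \<bullet> (transpose_mat U *\<^sub>v z) = x \<bullet> (U *\<^sub>v (transpose_mat U *\<^sub>v z))"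
    by (rule transpose_vec_mult_scalar[OF U UTv[OF z] x])
  also have "U *\<^sub>v (transpose_mat U *\<^sub>v z) = (U * transpose_mat U) *\<^sub>v z"
    by (rule assoc_mult_mat_vec[symmetric, OF U UT z])
  also have "\<dots> = z" unfolding UU' using z by (rule one_mult_mat_vec)
  finally show ?thesis .
qed

lemma UUy: assumes y: "y \<in> carrier_vec n" shows "transpose_mat U *\<^sub>v (U *\<^sub>v y) = y"
proof -
  have "transpose_mat U *\<^sub>v (U *\<^sub>v y) = (transpose_mat U * U) *\<^sub>v y"
    by (rule assoc_mult_mat_vec[symmetric, OF UT U y])
  thus ?thesis unfolding UU using y by (simp add: one_mult_mat_vec)
qed

lemma quad: assumes x: "x \<in> carrier_vec n"
  shows "x \<bullet> (M *\<^sub>v x) = (\<Sum>i<n. es ! i * ((transpose_mat U *\<^sub>v x) $ i)^2)"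
proof -
  define y where "y = transpose_mat U *\<^sub>v x"
  have y: "y \<in> carrier_vec n" unfolding y_def by (rule UTv[OF x])
  have dy: "diagm n es *\<^sub>v y \<in> carrier_vec n" using y by (intro mult_mat_vec_carrier) auto
  have "M *\<^sub>v x = (U * diagm n es) *\<^sub>v y"
    unfolding Mdec y_def by (rule assoc_mult_mat_vec[OF UD UT x])
  also have "\<dots> = U *\<^sub>v (diagm n es *\<^sub>v y)"
    by (rule assoc_mult_mat_vec[OF U diagm_carrier y])
  finally have "x \<bullet> (M *\<^sub>v x) = x \<bullet> (U *\<^sub>v (diagm n es *\<^sub>v y))" by simp
  also have "\<dots> = (transpose_mat U *\<^sub>v x) \<bullet> (diagm n es *\<^sub>v y)"
    by (rule transpose_vec_mult_scalar[symmetric, OF U dy x])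
  also have "\<dots> = y \<bullet> (diagm n es *\<^sub>v y)" unfolding y_def ..
  also have "\<dots> = (\<Sum>i<n. es ! i * (y $ i)^2)"
    unfolding diagm_mult_vec[OF y] scalar_prod_def using y
    by (auto simp: power2_eq_square lessThan_atLeast0 intro!: sum.cong)
  finally show ?thesis unfolding y_def .
qed

lemma nrm_sq: assumes x: "x \<in> carrier_vec n"
  shows "x \<bullet> x = (\<Sum>i<n. ((transpose_mat U *\<^sub>v x) $ i)^2)"
proof -
  have "x \<bullet> x = (transpose_mat U *\<^sub>v x) \<bullet> (transpose_mat U *\<^sub>v x)" using sp_pres[OF x x] by simp
  also have "\<dots> = (\<Sum>i<n. ((transpose_mat U *\<^sub>v x) $ i)^2)"
    unfolding self_sprod_real using UTv[OF x] by (simp only: carrier_vecD)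
  finally show ?thesis .
qed

end

definition ones :: "nat \<Rightarrow> real vec" where "ones N = vec N (\<lambda>_. 1)"

lemma ones_carrier[simp]: "ones N \<in> carrier_vec N" unfolding ones_def by simp

lemma sum2:
  fixes N :: nat and g :: "nat \<Rightarrow> real"
  assumes "2 \<le> N" "\<And>i. 2 \<le> i \<Longrightarrow> i < N \<Longrightarrow> g i = 0"
  shows "(\<Sum>i<N. g i) = g 0 + g 1"
proof -
  have "(\<Sum>i<N. g i) = (\<Sum>i\<in>{0,1}. g i)"
    by (rule sum.mono_neutral_right) (use assms in auto)
  thus ?thesis by simp
qed

lemma gap_nonneg:
  fixes M :: "real mat"
  assumes M: "M \<in> carrier_mat N N" and sym: "transpose_mat M = M" and N: "2 \<le> N"
    and psd: "\<And>x. x \<in> carrier_vec N \<Longrightarrow> x \<bullet> (M *\<^sub>v x) \<ge> 0"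
  shows "sorted_eigenvalues M ! 1 \<ge> 0"
proof -
  obtain U es where U: "U \<in> carrier_mat N N" and UU: "transpose_mat U * U = 1\<^sub>m N"
    and UU': "U * transpose_mat U = 1\<^sub>m N" and Mdec: "M = U * diagm N es * transpose_mat U"
    and srt: "sorted es" and len: "length es = N" and ev: "sorted_eigenvalues M = es"
    using spectral_sorted[OF M sym] by blast
  define y :: "real vec" where "y = unit_vec N 1"
  have y: "y \<in> carrier_vec N" unfolding y_def by simp
  define x where "x = U *\<^sub>v y"
  have x: "x \<in> carrier_vec N" unfolding x_def by (rule Uv[OF U UU UU' Mdec y])
  have Ux: "transpose_mat U *\<^sub>v x = y" unfolding x_def by (rule UUy[OF U UU UU' Mdec y])
  have "x \<bullet> (M *\<^sub>v x) = (\<Sum>i<N. es ! i * (y $ i)^2)"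
    using quad[OF U UU UU' Mdec x] unfolding Ux .
  also have "\<dots> = (\<Sum>i<N. if i = 1 then es ! 1 else 0)"
    by (intro sum.cong) (use N in \<open>auto simp: y_def\<close>)
  also have "\<dots> = es ! 1" using N by simp
  finally show ?thesis using psd[OF x] ev by simp
qed

lemma gap_witness:
  fixes M :: "real mat"
  assumes M: "M \<in> carrier_mat N N" and sym: "transpose_mat M = M" and N: "2 \<le> N"
  shows "\<exists>f \<in> carrier_vec N. f \<noteq> 0\<^sub>v N \<and> f \<bullet> ones N = 0 \<and>
           f \<bullet> (M *\<^sub>v f) \<le> sorted_eigenvalues M ! 1 * (f \<bullet> f)"
proof -
  obtain U es where U: "U \<in> carrier_mat N N" and UU: "transpose_mat U * U = 1\<^sub>m N"
    and UU': "U * transpose_mat U = 1\<^sub>m N" and Mdec: "M = U * diagm N es * transpose_mat U"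
    and srt: "sorted es" and len: "length es = N" and ev: "sorted_eigenvalues M = es"
    using spectral_sorted[OF M sym] by blast
  define a where "a = transpose_mat U *\<^sub>v ones N"
  have a: "a \<in> carrier_vec N" unfolding a_def by (rule UTv[OF U UU UU' Mdec ones_carrier])
  define y where "y = (if a $ 0 = 0 \<and> a $ 1 = 0 then unit_vec N 0
     else vec N (\<lambda>i. if i = 0 then a $ 1 else if i = 1 then - (a $ 0) else 0))"
  have y: "y \<in> carrier_vec N" unfolding y_def by auto
  have y2: "y $ i = 0" if "2 \<le> i" "i < N" for i using that unfolding y_def by auto
  have ynz: "y \<noteq> 0\<^sub>v N"
  proof
    assume y0: "y = 0\<^sub>v N"
    have "y $ 0 = 0" "y $ 1 = 0" using y0 N by auto
    thus False unfolding y_def using N by (auto split: if_splits)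
  qed
  define f where "f = U *\<^sub>v y"
  have f: "f \<in> carrier_vec N" unfolding f_def by (rule Uv[OF U UU UU' Mdec y])
  have Uf: "transpose_mat U *\<^sub>v f = y" unfolding f_def by (rule UUy[OF U UU UU' Mdec y])
  have fnz: "f \<noteq> 0\<^sub>v N"
  proof
    assume "f = 0\<^sub>v N"
    hence "transpose_mat U *\<^sub>v f = 0\<^sub>v N" using U by auto
    thus False using Uf ynz by simp
  qed
  have "f \<bullet> ones N = y \<bullet> a" unfolding a_def using sp_pres[OF U UU UU' Mdec f ones_carrier] Uf by simp
  also have "\<dots> = (\<Sum>i<N. y $ i * a $ i)" unfolding scalar_prod_def using a by (simp add: lessThan_atLeast0)
  also have "\<dots> = y $ 0 * a $ 0 + y $ 1 * a $ 1"
    by (rule sum2[OF N]) (simp add: y2)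
  also have "\<dots> = 0" unfolding y_def using N by auto
  finally have f1: "f \<bullet> ones N = 0" .
  have "f \<bullet> (M *\<^sub>v f) = (\<Sum>i<N. es ! i * (y $ i)^2)"
    using quad[OF U UU UU' Mdec f] unfolding Uf .
  also have "\<dots> \<le> (\<Sum>i<N. es ! 1 * (y $ i)^2)"
  proof (rule sum_mono)
    fix i assume i: "i \<in> {..<N}"
    show "es ! i * (y $ i)^2 \<le> es ! 1 * (y $ i)^2"
    proof (cases "i \<le> 1")
      case True
      have "es ! i \<le> es ! 1" using srt len N True by (intro sorted_nth_mono) auto
      thus ?thesis by (intro mult_right_mono) auto
    next
      case False thus ?thesis using y2[of i] i by auto
    qed
  qed
  also have "\<dots> = es ! 1 * (f \<bullet> f)"
    unfolding nrm_sq[OF U UU UU' Mdec f] Uf by (simp add: sum_distrib_left)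
  finally show ?thesis using f fnz f1 ev by blast
qed

lemma gap_lower:
  fixes M :: "real mat"
  assumes M: "M \<in> carrier_mat N N" and sym: "transpose_mat M = M" and N: "2 \<le> N"
    and psd: "\<And>x. x \<in> carrier_vec N \<Longrightarrow> x \<bullet> (M *\<^sub>v x) \<ge> 0"
    and M1: "M *\<^sub>v ones N = 0\<^sub>v N"
    and F: "F \<in> carrier_vec N" and F1: "F \<bullet> ones N = 0" and Fnz: "F \<noteq> 0\<^sub>v N"
  shows "sorted_eigenvalues M ! 1 * (F \<bullet> F) \<le> F \<bullet> (M *\<^sub>v F)"
proof -
  obtain U es where U: "U \<in> carrier_mat N N" and UU: "transpose_mat U * U = 1\<^sub>m N"
    and UU': "U * transpose_mat U = 1\<^sub>m N" and Mdec: "M = U * diagm N es * transpose_mat U"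
    and srt: "sorted es" and len: "length es = N" and ev: "sorted_eigenvalues M = es"
    using spectral_sorted[OF M sym] by blast
  define a where "a = transpose_mat U *\<^sub>v ones N"
  define b where "b = transpose_mat U *\<^sub>v F"
  define \<alpha> where "\<alpha> = (if a $ 0 = 0 \<and> b $ 0 = 0 then 0 else b $ 0)"
  define \<beta> where "\<beta> = (if a $ 0 = 0 \<and> b $ 0 = 0 then 1 else - (a $ 0))"
  have ab0: "\<alpha> * a $ 0 + \<beta> * b $ 0 = 0" unfolding \<alpha>_def \<beta>_def by auto
  have abnz: "\<alpha> \<noteq> 0 \<or> \<beta> \<noteq> 0" unfolding \<alpha>_def \<beta>_def by auto
  define x where "x = \<alpha> \<cdot>\<^sub>v ones N + \<beta> \<cdot>\<^sub>v F"
  have x: "x \<in> carrier_vec N" unfolding x_def using F by auto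
  have UTc: "transpose_mat U \<in> carrier_mat N N" using U by simp
  have "transpose_mat U *\<^sub>v x = \<alpha> \<cdot>\<^sub>v a + \<beta> \<cdot>\<^sub>v b"
    unfolding x_def a_def b_def
    using UTc F by (simp add: mult_add_distrib_mat_vec[OF UTc] mult_mat_vec[OF UTc])
  hence y0: "(transpose_mat U *\<^sub>v x) $ 0 = 0"
    using ab0 N UTc F unfolding a_def b_def by simp
  define L where "L = es ! 1"
  have "L * (x \<bullet> x) = (\<Sum>i<N. L * ((transpose_mat U *\<^sub>v x) $ i)^2)"
    unfolding nrm_sq[OF U UU UU' Mdec x] by (simp add: sum_distrib_left)
  also have "\<dots> \<le> (\<Sum>i<N. es ! i * ((transpose_mat U *\<^sub>v x) $ i)^2)"
  proof (rule sum_mono)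
    fix i assume i: "i \<in> {..<N}"
    show "L * ((transpose_mat U *\<^sub>v x) $ i)^2 \<le> es ! i * ((transpose_mat U *\<^sub>v x) $ i)^2"
    proof (cases "i = 0")
      case True thus ?thesis using y0 by simp
    next
      case False
      have "L \<le> es ! i" unfolding L_def using srt len i False by (intro sorted_nth_mono) auto
      thus ?thesis by (intro mult_right_mono) auto
    qed
  qed
  also have "\<dots> = x \<bullet> (M *\<^sub>v x)" by (rule quad[OF U UU UU' Mdec x, symmetric])
  finally have key: "L * (x \<bullet> x) \<le> x \<bullet> (M *\<^sub>v x)" .
  have Mc: "M *\<^sub>v F \<in> carrier_vec N" using M F by simp
  have oMF: "ones N \<bullet> (M *\<^sub>v F) = 0"
  proof -
    have "ones N \<bullet> (M *\<^sub>v F) = (transpose_mat M *\<^sub>v ones N) \<bullet> F"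
      by (rule transpose_vec_mult_scalar[OF M F ones_carrier, symmetric])
    also have "\<dots> = 0" unfolding sym M1 using F by simp
    finally show ?thesis .
  qed
  have z: "\<alpha> \<cdot>\<^sub>v 0\<^sub>v N + \<beta> \<cdot>\<^sub>v (M *\<^sub>v F) = \<beta> \<cdot>\<^sub>v (M *\<^sub>v F)"
    by (intro eq_vecI) (use M F in auto)
  have Mx: "M *\<^sub>v x = \<beta> \<cdot>\<^sub>v (M *\<^sub>v F)"
    unfolding x_def using M F M1 z by (simp add: mult_add_distrib_mat_vec[OF M] mult_mat_vec[OF M])
  have xMx: "x \<bullet> (M *\<^sub>v x) = \<beta>^2 * (F \<bullet> (M *\<^sub>v F))"
  proof -
    have "x \<bullet> (M *\<^sub>v x) = x \<bullet> (\<beta> \<cdot>\<^sub>v (M *\<^sub>v F))" by (simp only: Mx)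
    also have "\<dots> = \<beta>^2 * (F \<bullet> (M *\<^sub>v F))"
      unfolding x_def using F Mc oMF by (simp add: add_scalar_prod_distrib[of _ N] smult_scalar_prod_distrib[of _ N] scalar_prod_smult_distrib[of _ N] power2_eq_square)
    finally show ?thesis .
  qed
  have Fo: "ones N \<bullet> F = 0" using F1 comm_scalar_prod[OF F ones_carrier] by simp
  have oo: "ones N \<bullet> ones N = real N" unfolding ones_def scalar_prod_def by simp
  have xx: "x \<bullet> x = \<alpha>^2 * real N + \<beta>^2 * (F \<bullet> F)"
    unfolding x_def using F F1 Fo oo
    by (simp add: add_scalar_prod_distrib[of _ N] scalar_prod_add_distrib[of _ N] power2_eq_square)
  have q0: "F \<bullet> (M *\<^sub>v F) \<ge> 0" by (rule psd[OF F])
  have s0: "F \<bullet> F > 0" by (rule self_sprod_pos[OF F Fnz])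
  have evL: "sorted_eigenvalues M ! 1 = L" using ev L_def by simp
  have "L * (F \<bullet> F) \<le> F \<bullet> (M *\<^sub>v F)"
  proof (cases "L \<le> 0")
    case True
    hence "L * (F \<bullet> F) \<le> 0" using s0 by (simp add: mult_nonpos_nonneg)
    thus ?thesis using q0 by linarith
  next
    case False
    hence Lp: "L > 0" by simp
    have k2: "L * (\<alpha>^2 * real N) + \<beta>^2 * (L * (F \<bullet> F)) \<le> \<beta>^2 * (F \<bullet> (M *\<^sub>v F))"
      using key unfolding xx xMx by (simp add: algebra_simps)
    have t1: "L * (\<alpha>^2 * real N) \<ge> 0" using Lp by simp
    show ?thesis
    proof (cases "\<beta> = 0")
      case True
      hence "\<alpha> \<noteq> 0" using abnz by simp
      hence "L * (\<alpha>^2 * real N) > 0" using Lp N by simp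
      thus ?thesis using k2 True by simp
    next
      case False
      hence bp: "\<beta>^2 > 0" by simp
      have "\<beta>^2 * (L * (F \<bullet> F)) \<le> \<beta>^2 * (F \<bullet> (M *\<^sub>v F))" using k2 t1 by linarith
      thus ?thesis using bp by simp
    qed
  qed
  thus ?thesis using evL by simp
qed

definition qf :: "'a set \<Rightarrow> ('a \<Rightarrow> 'a \<Rightarrow> real) \<Rightarrow> ('a \<Rightarrow> real) \<Rightarrow> real" where
  "qf S g h = (\<Sum>\<sigma>\<in>S. \<Sum>\<eta>\<in>S. h \<sigma> * g \<sigma> \<eta> * h \<eta>)"

definition kmat :: "'a list \<Rightarrow> ('a \<Rightarrow> 'a \<Rightarrow> real) \<Rightarrow> real mat" where
  "kmat xs g = mat (length xs) (length xs) (\<lambda>(i,j). g (xs ! i) (xs ! j))"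

definition vecf :: "'a list \<Rightarrow> ('a \<Rightarrow> real) \<Rightarrow> real vec" where
  "vecf xs h = vec (length xs) (\<lambda>i. h (xs ! i))"

context
  fixes xs :: "'a list"
  assumes dist: "distinct xs"
begin

lemma reidx: "(\<Sum>i<length xs. f (xs ! i)) = (\<Sum>\<sigma>\<in>set xs. f \<sigma>)"
  using sum.reindex_bij_betw[OF bij_betw_nth[OF dist refl refl], of f] by simp

lemma vecf_carrier[simp]: "vecf xs h \<in> carrier_vec (length xs)"
  unfolding vecf_def by simp

lemma kmat_carrier[simp]: "kmat xs g \<in> carrier_mat (length xs) (length xs)"
  unfolding kmat_def by simp

lemma vecf_sprod: "vecf xs h \<bullet> vecf xs h' = (\<Sum>\<sigma>\<in>set xs. h \<sigma> * h' \<sigma>)"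
  unfolding vecf_def scalar_prod_def using reidx[of "\<lambda>\<sigma>. h \<sigma> * h' \<sigma>"]
  by (simp add: lessThan_atLeast0)

lemma vecf_ones: "vecf xs h \<bullet> ones (length xs) = (\<Sum>\<sigma>\<in>set xs. h \<sigma>)"
  unfolding vecf_def ones_def scalar_prod_def using reidx[of h]
  by (simp add: lessThan_atLeast0)

lemma kmat_vecf: "kmat xs g *\<^sub>v vecf xs h = vecf xs (\<lambda>\<sigma>. \<Sum>\<eta>\<in>set xs. g \<sigma> \<eta> * h \<eta>)"
proof (rule eq_vecI)
  fix i assume "i < dim_vec (vecf xs (\<lambda>\<sigma>. \<Sum>\<eta>\<in>set xs. g \<sigma> \<eta> * h \<eta>))"
  hence i: "i < length xs" by (simp add: vecf_def)
  have "(kmat xs g *\<^sub>v vecf xs h) $ i = (\<Sum>j<length xs. g (xs ! i) (xs ! j) * h (xs ! j))"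
    using i unfolding kmat_def vecf_def by (simp add: lessThan_atLeast0 row_def scalar_prod_def)
  also have "\<dots> = (\<Sum>\<eta>\<in>set xs. g (xs ! i) \<eta> * h \<eta>)" by (rule reidx)
  finally show "(kmat xs g *\<^sub>v vecf xs h) $ i = vecf xs (\<lambda>\<sigma>. \<Sum>\<eta>\<in>set xs. g \<sigma> \<eta> * h \<eta>) $ i"
    using i by (simp add: vecf_def)
qed (simp add: kmat_def vecf_def)

lemma vecf_quad: "vecf xs h \<bullet> (kmat xs g *\<^sub>v vecf xs h) = qf (set xs) g h"
  unfolding kmat_vecf vecf_sprod qf_def by (simp add: sum_distrib_left mult.assoc)

lemma vecf_zero: "vecf xs h = 0\<^sub>v (length xs) \<longleftrightarrow> (\<forall>\<sigma>\<in>set xs. h \<sigma> = 0)"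
proof
  assume z: "vecf xs h = 0\<^sub>v (length xs)"
  show "\<forall>\<sigma>\<in>set xs. h \<sigma> = 0"
  proof
    fix \<sigma> assume "\<sigma> \<in> set xs"
    then obtain i where i: "i < length xs" and si: "xs ! i = \<sigma>" by (auto simp: in_set_conv_nth)
    have "vecf xs h $ i = 0" using z i by simp
    thus "h \<sigma> = 0" using i si by (simp add: vecf_def)
  qed
next
  assume "\<forall>\<sigma>\<in>set xs. h \<sigma> = 0"
  thus "vecf xs h = 0\<^sub>v (length xs)" unfolding vecf_def by (intro eq_vecI) auto
qed

lemma vec_is_vecf: assumes x: "x \<in> carrier_vec (length xs)"
  shows "x = vecf xs (\<lambda>\<sigma>. x $ inv_into {..<length xs} ((!) xs) \<sigma>)"
proof (rule eq_vecI)
  fix i assume "i < dim_vec (vecf xs (\<lambda>\<sigma>. x $ inv_into {..<length xs} ((!) xs) \<sigma>))"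
  hence i: "i < length xs" by (simp add: vecf_def)
  have "inv_into {..<length xs} ((!) xs) (xs ! i) = i"
    using i bij_betw_nth[OF dist refl refl] by (simp add: bij_betw_def inv_into_f_f)
  thus "x $ i = vecf xs (\<lambda>\<sigma>. x $ inv_into {..<length xs} ((!) xs) \<sigma>) $ i"
    using i by (simp add: vecf_def)
qed (use x in \<open>simp add: vecf_def\<close>)

lemma kmat_sym: assumes "\<And>\<sigma> \<eta>. g \<sigma> \<eta> = g \<eta> \<sigma>" shows "transpose_mat (kmat xs g) = kmat xs g"
  unfolding kmat_def by (intro eq_matI) (auto simp: assms)

lemma kmat_ones: assumes "\<And>\<sigma>. \<sigma> \<in> set xs \<Longrightarrow> (\<Sum>\<eta>\<in>set xs. g \<sigma> \<eta>) = 0"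
  shows "kmat xs g *\<^sub>v ones (length xs) = 0\<^sub>v (length xs)"
proof -
  have "ones (length xs) = vecf xs (\<lambda>_. 1)" unfolding ones_def vecf_def by simp
  hence "kmat xs g *\<^sub>v ones (length xs) = vecf xs (\<lambda>\<sigma>. \<Sum>\<eta>\<in>set xs. g \<sigma> \<eta>)"
    by (simp add: kmat_vecf)
  also have "\<dots> = 0\<^sub>v (length xs)" using assms by (subst vecf_zero) auto
  finally show ?thesis .
qed

lemma fun_psd_vec:
  assumes psd: "\<And>h. qf (set xs) g h \<ge> 0" and x: "x \<in> carrier_vec (length xs)"
  shows "x \<bullet> (kmat xs g *\<^sub>v x) \<ge> 0"
proof -
  obtain h where "x = vecf xs h" using vec_is_vecf[OF x] by blast
  thus ?thesis using psd[of h] by (simp add: vecf_quad)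
qed

end

lemma fun_gap_nonneg:
  assumes dist: "distinct xs" and N: "2 \<le> length xs" and gsym: "\<And>\<sigma> \<eta>. g \<sigma> \<eta> = g \<eta> \<sigma>"
    and psd: "\<And>h. qf (set xs) g h \<ge> 0"
  shows "sorted_eigenvalues (kmat xs g) ! 1 \<ge> 0"
  by (rule gap_nonneg[OF kmat_carrier[OF dist] kmat_sym[OF dist gsym] N fun_psd_vec[OF dist psd]])

lemma fun_gap_lower:
  assumes dist: "distinct xs" and N: "2 \<le> length xs" and gsym: "\<And>\<sigma> \<eta>. g \<sigma> \<eta> = g \<eta> \<sigma>"
    and psd: "\<And>h. qf (set xs) g h \<ge> 0"
    and rows: "\<And>\<sigma>. \<sigma> \<in> set xs \<Longrightarrow> (\<Sum>\<eta>\<in>set xs. g \<sigma> \<eta>) = 0"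
    and F1: "(\<Sum>\<sigma>\<in>set xs. F \<sigma>) = 0" and Fnz: "\<exists>\<sigma>\<in>set xs. F \<sigma> \<noteq> 0"
  shows "sorted_eigenvalues (kmat xs g) ! 1 * (\<Sum>\<sigma>\<in>set xs. (F \<sigma>)^2) \<le> qf (set xs) g F"
proof -
  have "sorted_eigenvalues (kmat xs g) ! 1 * (vecf xs F \<bullet> vecf xs F) \<le> vecf xs F \<bullet> (kmat xs g *\<^sub>v vecf xs F)"
    by (rule gap_lower[OF kmat_carrier[OF dist] kmat_sym[OF dist gsym] N fun_psd_vec[OF dist psd]
          kmat_ones[OF dist rows] vecf_carrier[OF dist]])
       (use F1 Fnz in \<open>auto simp: vecf_ones[OF dist] vecf_zero[OF dist]\<close>)
  thus ?thesis unfolding vecf_quad[OF dist] vecf_sprod[OF dist] by (simp add: power2_eq_square)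
qed

lemma fun_gap_witness:
  assumes dist: "distinct xs" and N: "2 \<le> length xs" and gsym: "\<And>\<sigma> \<eta>. g \<sigma> \<eta> = g \<eta> \<sigma>"
  shows "\<exists>h. (\<Sum>\<sigma>\<in>set xs. h \<sigma>) = 0 \<and> (\<exists>\<sigma>\<in>set xs. h \<sigma> \<noteq> 0) \<and>
             qf (set xs) g h \<le> sorted_eigenvalues (kmat xs g) ! 1 * (\<Sum>\<sigma>\<in>set xs. (h \<sigma>)^2)"
proof -
  have ex: "\<exists>f \<in> carrier_vec (length xs). f \<noteq> 0\<^sub>v (length xs) \<and> f \<bullet> ones (length xs) = 0 \<and>
           f \<bullet> (kmat xs g *\<^sub>v f) \<le> sorted_eigenvalues (kmat xs g) ! 1 * (f \<bullet> f)"
    by (rule gap_witness[OF kmat_carrier[OF dist] kmat_sym[OF dist gsym] N])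
  then obtain f where f: "f \<in> carrier_vec (length xs)" and rest: "f \<noteq> 0\<^sub>v (length xs) \<and> f \<bullet> ones (length xs) = 0 \<and>
           f \<bullet> (kmat xs g *\<^sub>v f) \<le> sorted_eigenvalues (kmat xs g) ! 1 * (f \<bullet> f)"
    by (rule bexE)
  note fnz = rest[THEN conjunct1] and f1 = rest[THEN conjunct2, THEN conjunct1]
    and fq = rest[THEN conjunct2, THEN conjunct2]
  define h where "h = (\<lambda>\<sigma>. f $ inv_into {..<length xs} ((!) xs) \<sigma>)"
  have fh: "f = vecf xs h" unfolding h_def by (rule vec_is_vecf[OF dist f])
  have a: "(\<Sum>\<sigma>\<in>set xs. h \<sigma>) = 0" using f1 unfolding fh vecf_ones[OF dist] .
  have b: "\<exists>\<sigma>\<in>set xs. h \<sigma> \<noteq> 0" using fnz unfolding fh vecf_zero[OF dist] by blast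
  have c: "qf (set xs) g h \<le> sorted_eigenvalues (kmat xs g) ! 1 * (\<Sum>\<sigma>\<in>set xs. h \<sigma> * h \<sigma>)"
    using fq unfolding fh vecf_quad[OF dist] vecf_sprod[OF dist] .
  have "(\<Sum>\<sigma>\<in>set xs. h \<sigma> * h \<sigma>) = (\<Sum>\<sigma>\<in>set xs. (h \<sigma>)^2)" by (simp add: power2_eq_square)
  thus ?thesis using a b c by auto
qed

lemma pc_finite: "finite W \<Longrightarrow> finite (proper_colourings E W k)"
proof -
  assume W: "finite W"
  have "proper_colourings E W k \<subseteq> {f. \<forall>x. (x \<in> W \<longrightarrow> f x \<in> {..<k}) \<and> (x \<notin> W \<longrightarrow> f x = 0)}"
    unfolding proper_colourings_def by auto
  moreover have "finite {f. \<forall>x. (x \<in> W \<longrightarrow> f x \<in> {..<k}) \<and> (x \<notin> W \<longrightarrow> f x = (0::nat))}"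
    by (rule finite_set_of_finite_funs) (use W in auto)
  ultimately show ?thesis by (rule finite_subset)
qed

lemma state_list_props:
  assumes "finite W"
  shows "distinct (state_list E W k)" "set (state_list E W k) = proper_colourings E W k"
proof -
  have "\<exists>xs. distinct xs \<and> set xs = proper_colourings E W k"
    using finite_distinct_list[OF pc_finite[OF assms]] by metis
  hence "distinct (state_list E W k) \<and> set (state_list E W k) = proper_colourings E W k"
    unfolding state_list_def by (rule someI_ex)
  thus "distinct (state_list E W k)" "set (state_list E W k) = proper_colourings E W k" by auto
qed

lemma length_state_list:
  assumes "finite W" shows "length (state_list E W k) = card (proper_colourings E W k)"
  using state_list_props[OF assms] distinct_card by metis

lemma gap_kmat: "glauber_gap E W k p = sorted_eigenvalues (kmat (state_list E W k) (\<lambda>\<sigma> \<eta>. - glauber_generator E W k p \<sigma> \<eta>)) ! 1"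
  unfolding glauber_gap_def minus_generator_mat_def kmat_def Let_def by simp

lemma rate_sym: "glauber_rate p W \<sigma> \<eta> = glauber_rate p W \<eta> \<sigma>"
proof -
  have "{y. \<sigma> y \<noteq> \<eta> y} = {y. \<eta> y \<noteq> \<sigma> y}" by auto
  thus ?thesis unfolding glauber_rate_def by simp
qed

lemma rate_refl[simp]: "glauber_rate p W \<sigma> \<sigma> = 0"
  unfolding glauber_rate_def by auto

lemma rate_nonneg:
  assumes "\<And>x. x \<in> W \<Longrightarrow> p x \<ge> 0" shows "glauber_rate p W \<sigma> \<eta> \<ge> 0"
proof (cases "\<exists>x\<in>W. {y. \<sigma> y \<noteq> \<eta> y} = {x}")
  case True
  then obtain x where x: "x \<in> W" "{y. \<sigma> y \<noteq> \<eta> y} = {x}" by blast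
  hence "(THE x. {y. \<sigma> y \<noteq> \<eta> y} = {x}) = x" by auto
  thus ?thesis unfolding glauber_rate_def using True x assms by simp
qed (simp add: glauber_rate_def)

definition dir :: "(nat \<Rightarrow> real) \<Rightarrow> nat set \<Rightarrow> (nat \<Rightarrow> nat) set \<Rightarrow> ((nat \<Rightarrow> nat) \<Rightarrow> real) \<Rightarrow> real" where
  "dir p W S h = (\<Sum>\<sigma>\<in>S. \<Sum>\<eta>\<in>S. glauber_rate p W \<sigma> \<eta> * (h \<sigma> - h \<eta>)^2)"

context
  fixes E :: "nat \<Rightarrow> nat \<Rightarrow> bool" and W :: "nat set" and k :: nat and p :: "nat \<Rightarrow> real"
  assumes W: "finite W"
begin

abbreviation "\<Omega> \<equiv> proper_colourings E W k"
abbreviation "rt \<equiv> glauber_rate p W"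
abbreviation "gg \<equiv> (\<lambda>\<sigma> \<eta>. - glauber_generator E W k p \<sigma> \<eta>)"
definition "Dg \<sigma> = (\<Sum>\<zeta>\<in>\<Omega>. rt \<sigma> \<zeta>)"

lemma gg_eq: "gg \<sigma> \<eta> = (if \<sigma> = \<eta> then Dg \<sigma> else 0) - rt \<sigma> \<eta>"
proof -
  have "(\<Sum>\<zeta>\<in>\<Omega> - {\<sigma>}. rt \<sigma> \<zeta>) = Dg \<sigma>"
    unfolding Dg_def using pc_finite[OF W] by (simp add: sum_diff1)
  thus ?thesis unfolding glauber_generator_def by auto
qed

lemma gg_sym: "gg \<sigma> \<eta> = gg \<eta> \<sigma>"
  unfolding glauber_generator_def using rate_sym by auto

lemma gg_rows: "\<sigma> \<in> \<Omega> \<Longrightarrow> (\<Sum>\<eta>\<in>\<Omega>. gg \<sigma> \<eta>) = 0"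
  unfolding gg_eq using pc_finite[OF W] by (simp add: sum_subtractf Dg_def)

lemma qf_dir: "qf \<Omega> gg h = dir p W \<Omega> h / 2"
proof -
  have fin: "finite \<Omega>" by (rule pc_finite[OF W])
  have A: "qf \<Omega> gg h = (\<Sum>\<sigma>\<in>\<Omega>. (h \<sigma>)^2 * Dg \<sigma>) - (\<Sum>\<sigma>\<in>\<Omega>. \<Sum>\<eta>\<in>\<Omega>. h \<sigma> * rt \<sigma> \<eta> * h \<eta>)"
  proof -
    have "qf \<Omega> gg h = (\<Sum>\<sigma>\<in>\<Omega>. (\<Sum>\<eta>\<in>\<Omega>. if \<sigma> = \<eta> then h \<sigma> * Dg \<sigma> * h \<sigma> else 0) - (\<Sum>\<eta>\<in>\<Omega>. h \<sigma> * rt \<sigma> \<eta> * h \<eta>))"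
      unfolding qf_def gg_eq
      by (intro sum.cong refl, subst sum_subtractf[symmetric], intro sum.cong refl) (auto simp: algebra_simps)
    also have "\<dots> = (\<Sum>\<sigma>\<in>\<Omega>. (h \<sigma>)^2 * Dg \<sigma> - (\<Sum>\<eta>\<in>\<Omega>. h \<sigma> * rt \<sigma> \<eta> * h \<eta>))"
      using fin by (intro sum.cong refl) (simp add: power2_eq_square)
    finally show ?thesis by (simp add: sum_subtractf)
  qed
  have sw: "(\<Sum>\<sigma>\<in>\<Omega>. \<Sum>\<eta>\<in>\<Omega>. rt \<sigma> \<eta> * (h \<eta>)^2) = (\<Sum>\<sigma>\<in>\<Omega>. (h \<sigma>)^2 * Dg \<sigma>)"
  proof -
    have "(\<Sum>\<sigma>\<in>\<Omega>. \<Sum>\<eta>\<in>\<Omega>. rt \<sigma> \<eta> * (h \<eta>)^2) = (\<Sum>\<eta>\<in>\<Omega>. \<Sum>\<sigma>\<in>\<Omega>. rt \<sigma> \<eta> * (h \<eta>)^2)"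
      by (rule sum.swap)
    also have "\<dots> = (\<Sum>\<eta>\<in>\<Omega>. (h \<eta>)^2 * Dg \<eta>)"
      unfolding Dg_def by (simp add: sum_distrib_left sum_distrib_right rate_sym[of p W _ ] mult.commute)
    finally show ?thesis .
  qed
  have B: "dir p W \<Omega> h = 2 * (\<Sum>\<sigma>\<in>\<Omega>. (h \<sigma>)^2 * Dg \<sigma>) - 2 * (\<Sum>\<sigma>\<in>\<Omega>. \<Sum>\<eta>\<in>\<Omega>. h \<sigma> * rt \<sigma> \<eta> * h \<eta>)"
  proof -
    have "dir p W \<Omega> h = (\<Sum>\<sigma>\<in>\<Omega>. \<Sum>\<eta>\<in>\<Omega>. rt \<sigma> \<eta> * (h \<sigma>)^2 + rt \<sigma> \<eta> * (h \<eta>)^2 - 2 * (h \<sigma> * rt \<sigma> \<eta> * h \<eta>))"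
      unfolding dir_def by (intro sum.cong refl) (simp add: power2_eq_square algebra_simps)
    also have "\<dots> = (\<Sum>\<sigma>\<in>\<Omega>. \<Sum>\<eta>\<in>\<Omega>. rt \<sigma> \<eta> * (h \<sigma>)^2) + (\<Sum>\<sigma>\<in>\<Omega>. \<Sum>\<eta>\<in>\<Omega>. rt \<sigma> \<eta> * (h \<eta>)^2)
        - 2 * (\<Sum>\<sigma>\<in>\<Omega>. \<Sum>\<eta>\<in>\<Omega>. h \<sigma> * rt \<sigma> \<eta> * h \<eta>)"
      by (simp add: sum.distrib sum_subtractf sum_distrib_left)
    also have "(\<Sum>\<sigma>\<in>\<Omega>. \<Sum>\<eta>\<in>\<Omega>. rt \<sigma> \<eta> * (h \<sigma>)^2) = (\<Sum>\<sigma>\<in>\<Omega>. (h \<sigma>)^2 * Dg \<sigma>)"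
      unfolding Dg_def by (simp add: sum_distrib_left sum_distrib_right mult.commute)
    finally show ?thesis unfolding sw by simp
  qed
  show ?thesis unfolding A B by simp
qed

lemma dir_nonneg: assumes "\<And>x. x \<in> W \<Longrightarrow> p x \<ge> 0" shows "dir p W \<Omega> h \<ge> 0"
  unfolding dir_def by (intro sum_nonneg mult_nonneg_nonneg rate_nonneg assms) auto

end

locale setting =
  fixes n k v :: nat and E :: "nat \<Rightarrow> nat \<Rightarrow> bool" and p :: "nat \<Rightarrow> real"
  assumes sym: "\<And>x y. E x y \<Longrightarrow> E y x"
    and irrefl: "\<And>x. \<not> E x x"
    and in_V: "\<And>x y. E x y \<Longrightarrow> x < n \<and> y < n"
    and k_pos: "0 < k"
    and v_in: "v < n"
    and clique: "is_clique E (neighbourhood E {0..<n} v)"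
    and clique_size: "card (neighbourhood E {0..<n} v) + 2 \<le> k"
    and p_pos: "\<And>i. i < n \<Longrightarrow> 0 < p i"
begin

abbreviation "V \<equiv> {0..<n}"
abbreviation "V' \<equiv> {0..<n} - {v}"
abbreviation "E' \<equiv> (\<lambda>x y. E x y \<and> x \<noteq> v \<and> y \<noteq> v)"
abbreviation "\<Omega>A \<equiv> proper_colourings E V k"
abbreviation "\<Omega>B \<equiv> proper_colourings E' V' k"
abbreviation "Nv \<equiv> neighbourhood E V v"
definition "rs \<sigma> = \<sigma>(v := 0)"
definition "cc = k - card Nv"
definition "fib \<tau> = {\<sigma> \<in> \<Omega>A. rs \<sigma> = \<tau>}"

lemma finA: "finite \<Omega>A" by (rule pc_finite) simp
lemma finB: "finite \<Omega>B" by (rule pc_finite) simp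

lemma Nv_sub: "Nv \<subseteq> V'" unfolding neighbourhood_def using irrefl by auto

lemma rs_B: "\<sigma> \<in> \<Omega>A \<Longrightarrow> rs \<sigma> \<in> \<Omega>B"
  unfolding proper_colourings_def rs_def by auto

lemma B_v: "\<tau> \<in> \<Omega>B \<Longrightarrow> \<tau> v = 0"
  unfolding proper_colourings_def by auto

lemma fib_eq: assumes \<tau>: "\<tau> \<in> \<Omega>B"
  shows "fib \<tau> = (\<lambda>a. \<tau>(v := a)) ` {a. a < k \<and> a \<notin> \<tau> ` Nv}"
proof (intro equalityI subsetI)
  fix \<sigma> assume "\<sigma> \<in> fib \<tau>"
  hence \<sigma>: "\<sigma> \<in> \<Omega>A" and r: "\<sigma>(v := 0) = \<tau>" unfolding fib_def rs_def by simp_all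
  have \<sigma>p: "\<forall>x\<in>V. \<sigma> x < k" "\<forall>x\<in>V. \<forall>y\<in>V. E x y \<longrightarrow> \<sigma> x \<noteq> \<sigma> y"
    using \<sigma> unfolding proper_colourings_def by simp_all
  have rz: "z \<noteq> v \<Longrightarrow> \<sigma> z = \<tau> z" for z using fun_cong[OF r, of z] by simp
  have eq\<sigma>: "\<sigma> = \<tau>(v := \<sigma> v)"
  proof (rule ext)
    fix z show "\<sigma> z = (\<tau>(v := \<sigma> v)) z" using rz[of z] by (cases "z = v") simp_all
  qed
  have lt: "\<sigma> v < k" using \<sigma>p(1) v_in by simp
  have notin: "\<sigma> v \<notin> \<tau> ` Nv"
  proof
    assume "\<sigma> v \<in> \<tau> ` Nv"
    then obtain u where u2: "\<sigma> v = \<tau> u" and u1: "u \<in> Nv" by (rule imageE)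
    have uv: "u \<noteq> v" using u1 Nv_sub by blast
    have "\<sigma> u = \<tau> u" by (rule rz[OF uv])
    hence su: "\<sigma> u = \<sigma> v" using u2 by simp
    have Evu: "E v u" and uV: "u \<in> V" using u1 unfolding neighbourhood_def by simp_all
    have "v \<in> V" using v_in by simp
    hence "\<sigma> v \<noteq> \<sigma> u" using \<sigma>p(2) uV Evu by blast
    thus False using su by simp
  qed
  show "\<sigma> \<in> (\<lambda>a. \<tau>(v := a)) ` {a. a < k \<and> a \<notin> \<tau> ` Nv}"
    by (rule image_eqI[where x="\<sigma> v" and f="\<lambda>a. \<tau>(v := a)"], rule eq\<sigma>) (use lt notin in simp)
next
  fix \<sigma> assume "\<sigma> \<in> (\<lambda>a. \<tau>(v := a)) ` {a. a < k \<and> a \<notin> \<tau> ` Nv}"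
  then obtain a where \<sigma>: "\<sigma> = \<tau>(v := a)" and a': "a \<in> {a. a < k \<and> a \<notin> \<tau> ` Nv}" by (rule imageE)
  have a: "a < k" "a \<notin> \<tau> ` Nv" using a' by simp_all
  have \<tau>p: "\<forall>x\<in>V'. \<tau> x < k" "\<forall>x. x \<notin> V' \<longrightarrow> \<tau> x = 0"
    "\<forall>x\<in>V'. \<forall>y\<in>V'. E' x y \<longrightarrow> \<tau> x \<noteq> \<tau> y"
    using \<tau> unfolding proper_colourings_def by auto
  have "\<sigma> \<in> \<Omega>A" unfolding proper_colourings_def
  proof (intro CollectI conjI ballI allI impI)
    fix x assume x: "x \<in> V" show "\<sigma> x < k"
    proof (cases "x = v")
      case True thus ?thesis using a \<sigma> by simp
    next
      case False thus ?thesis using x \<tau>p(1) \<sigma> by simp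
    qed
  next
    fix x assume x: "x \<notin> V"
    hence "x \<noteq> v" "x \<notin> V'" using v_in by auto
    thus "\<sigma> x = 0" using \<tau>p(2) \<sigma> by simp
  next
    fix x y assume x: "x \<in> V" and y: "y \<in> V" and e: "E x y"
    show "\<sigma> x \<noteq> \<sigma> y"
    proof (cases "x = v")
      case True
      hence "y \<noteq> v" using e irrefl by auto
      hence "y \<in> Nv" using True e y unfolding neighbourhood_def by auto
      thus ?thesis using True \<open>y \<noteq> v\<close> a \<sigma> by auto
    next
      case False
      show ?thesis
      proof (cases "y = v")
        case True
        hence "x \<in> Nv" using False e x sym unfolding neighbourhood_def by auto
        thus ?thesis using True False a \<sigma> by auto
      next
        case False2: False
        have "x \<in> V'" "y \<in> V'" using False False2 x y by auto
        hence "\<tau> x \<noteq> \<tau> y" using \<tau>p(3) e False False2 by blast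
        thus ?thesis using False False2 \<sigma> by simp
      qed
    qed
  qed
  moreover have "rs \<sigma> = \<tau>" unfolding rs_def \<sigma> using B_v[OF \<tau>] by (intro ext) simp
  ultimately show "\<sigma> \<in> fib \<tau>" unfolding fib_def by simp
qed

lemma fib_card: assumes \<tau>: "\<tau> \<in> \<Omega>B" shows "card (fib \<tau>) = cc"
proof -
  have inj: "inj_on (\<lambda>a. \<tau>(v := a)) X" for X
    by (rule inj_onI, drule fun_cong[of _ _ v]) simp
  have injN: "inj_on \<tau> Nv"
  proof (rule inj_onI)
    fix a b assume a: "a \<in> Nv" and b: "b \<in> Nv" and eq: "\<tau> a = \<tau> b"
    show "a = b"
    proof (rule ccontr)
      assume ab: "a \<noteq> b"
      hence "E a b" using clique a b unfolding is_clique_def by auto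
      moreover have "a \<in> V'" "b \<in> V'" using a b Nv_sub by auto
      ultimately have "\<tau> a \<noteq> \<tau> b" using \<tau> unfolding proper_colourings_def by auto
      thus False using eq by simp
    qed
  qed
  have sub: "\<tau> ` Nv \<subseteq> {..<k}" using \<tau> Nv_sub unfolding proper_colourings_def by auto
  have finN: "finite Nv" unfolding neighbourhood_def by simp
  have "{a. a < k \<and> a \<notin> \<tau> ` Nv} = {..<k} - \<tau> ` Nv" by auto
  hence "card {a. a < k \<and> a \<notin> \<tau> ` Nv} = k - card Nv"
    using card_Diff_subset[OF finite_imageI[OF finN] sub] card_image[OF injN] by simp
  thus ?thesis unfolding fib_eq[OF \<tau>] cc_def by (simp add: card_image[OF inj])
qed

lemma sum_lift: "(\<Sum>\<sigma>\<in>\<Omega>A. \<Phi> (rs \<sigma>)) = real cc * (\<Sum>\<tau>\<in>\<Omega>B. (\<Phi> \<tau> :: real))"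
proof -
  have "(\<Sum>\<sigma>\<in>\<Omega>A. \<Phi> (rs \<sigma>)) = (\<Sum>\<tau>\<in>\<Omega>B. \<Sum>\<sigma>\<in>fib \<tau>. \<Phi> (rs \<sigma>))"
    unfolding fib_def by (rule sum.group[symmetric, OF finA finB]) (auto intro: rs_B)
  also have "\<dots> = (\<Sum>\<tau>\<in>\<Omega>B. real cc * \<Phi> \<tau>)"
  proof (rule sum.cong[OF refl])
    fix \<tau> assume \<tau>: "\<tau> \<in> \<Omega>B"
    have "(\<Sum>\<sigma>\<in>fib \<tau>. \<Phi> (rs \<sigma>)) = (\<Sum>\<sigma>\<in>fib \<tau>. \<Phi> \<tau>)" unfolding fib_def by simp
    thus "(\<Sum>\<sigma>\<in>fib \<tau>. \<Phi> (rs \<sigma>)) = real cc * \<Phi> \<tau>" using fib_card[OF \<tau>] by simp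
  qed
  finally show ?thesis by (simp add: sum_distrib_left)
qed

lemma card_A: "card \<Omega>A = cc * card \<Omega>B"
  using sum_lift[of "\<lambda>_. 1"] by (simp add: of_nat_mult[symmetric] del: of_nat_mult)

lemma cc_ge2: "cc \<ge> 2" unfolding cc_def using clique_size by simp

end

context setting begin

lemma rate_zero_off:
  assumes \<sigma>: "\<sigma> \<in> \<Omega>A" and \<tau>': "\<tau>' \<in> \<Omega>B" and neq: "rs \<sigma> \<noteq> \<tau>'"
    and \<eta>: "\<eta> \<in> fib \<tau>'" and ne: "\<eta> \<noteq> \<tau>'(v := \<sigma> v)"
  shows "glauber_rate p V \<sigma> \<eta> = 0"
proof (rule ccontr)
  assume nz: "glauber_rate p V \<sigma> \<eta> \<noteq> 0"
  have "\<exists>x\<in>V. {y. \<sigma> y \<noteq> \<eta> y} = {x}"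
  proof (rule ccontr)
    assume "\<not> (\<exists>x\<in>V. {y. \<sigma> y \<noteq> \<eta> y} = {x})"
    hence "glauber_rate p V \<sigma> \<eta> = 0" unfolding glauber_rate_def by simp
    thus False using nz by simp
  qed
  then obtain x where x: "x \<in> V" and D: "{y. \<sigma> y \<noteq> \<eta> y} = {x}" by (rule bexE)
  have r\<eta>: "rs \<eta> = \<tau>'" using \<eta> unfolding fib_def by simp
  obtain y where y: "rs \<sigma> y \<noteq> rs \<eta> y" using neq r\<eta> by (metis ext)
  have yv: "y \<noteq> v" using y unfolding rs_def by (cases "y = v") simp_all
  hence "\<sigma> y \<noteq> \<eta> y" using y unfolding rs_def by simp
  hence "y \<in> {y. \<sigma> y \<noteq> \<eta> y}" by simp
  hence yx: "y = x" using D by simp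
  have "v \<notin> {y. \<sigma> y \<noteq> \<eta> y}" using D yx yv by simp
  hence \<sigma>v: "\<sigma> v = \<eta> v" by simp
  have "\<eta> = \<tau>'(v := \<sigma> v)"
  proof (rule ext)
    fix z show "\<eta> z = (\<tau>'(v := \<sigma> v)) z"
    proof (cases "z = v")
      case True thus ?thesis using \<sigma>v by simp
    next
      case False
      have "rs \<eta> z = \<tau>' z" using r\<eta> by simp
      thus ?thesis using False unfolding rs_def by simp
    qed
  qed
  thus False using ne by simp
qed

lemma rate_eq0:
  assumes \<sigma>: "\<sigma> \<in> \<Omega>A" and \<tau>': "\<tau>' \<in> \<Omega>B"
  shows "glauber_rate p V \<sigma> (\<tau>'(v := \<sigma> v)) = glauber_rate p V' (rs \<sigma>) \<tau>'"
proof -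
  define D where "D = {z. rs \<sigma> z \<noteq> \<tau>' z}"
  have DD: "{z. \<sigma> z \<noteq> (\<tau>'(v := \<sigma> v)) z} = D"
  proof (intro equalityI subsetI)
    fix z assume "z \<in> {z. \<sigma> z \<noteq> (\<tau>'(v := \<sigma> v)) z}"
    hence "z \<noteq> v" "\<sigma> z \<noteq> \<tau>' z" by (cases "z = v", simp_all)+
    thus "z \<in> D" unfolding D_def rs_def by simp
  next
    fix z assume z: "z \<in> D"
    have "z \<noteq> v" using z B_v[OF \<tau>'] unfolding D_def rs_def by (cases "z = v") simp_all
    thus "z \<in> {z. \<sigma> z \<noteq> (\<tau>'(v := \<sigma> v)) z}" using z unfolding D_def rs_def by simp
  qed
  have vD: "v \<notin> D" using B_v[OF \<tau>'] unfolding D_def rs_def by simp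
  have ex: "(\<exists>x\<in>V. D = {x}) \<longleftrightarrow> (\<exists>x\<in>V'. D = {x})"
  proof
    assume "\<exists>x\<in>V. D = {x}"
    then obtain x where "x \<in> V" "D = {x}" by (rule bexE)
    moreover hence "x \<noteq> v" using vD by auto
    ultimately show "\<exists>x\<in>V'. D = {x}" by blast
  next
    assume "\<exists>x\<in>V'. D = {x}"
    then obtain x where "x \<in> V'" "D = {x}" by (rule bexE)
    thus "\<exists>x\<in>V. D = {x}" by blast
  qed
  show ?thesis unfolding glauber_rate_def DD D_def[symmetric] using ex by simp
qed

lemma claim:
  assumes \<sigma>: "\<sigma> \<in> \<Omega>A" and \<tau>': "\<tau>' \<in> \<Omega>B"
  shows "(\<Sum>\<eta>\<in>fib \<tau>'. glauber_rate p V \<sigma> \<eta> * (h (rs \<sigma>) - h (rs \<eta>))^2)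
         \<le> glauber_rate p V' (rs \<sigma>) \<tau>' * (h (rs \<sigma>) - h \<tau>')^2"
proof -
  have finF: "finite (fib \<tau>')" unfolding fib_def using finA by simp
  define X where "X = (h (rs \<sigma>) - h \<tau>')^2"
  have "(\<Sum>\<eta>\<in>fib \<tau>'. glauber_rate p V \<sigma> \<eta> * (h (rs \<sigma>) - h (rs \<eta>))^2)
      = (\<Sum>\<eta>\<in>fib \<tau>'. glauber_rate p V \<sigma> \<eta> * X)"
    unfolding X_def fib_def by (intro sum.cong refl) simp
  also have "\<dots> \<le> glauber_rate p V' (rs \<sigma>) \<tau>' * X"
  proof (cases "rs \<sigma> = \<tau>'")
    case True thus ?thesis unfolding X_def by simp
  next
    case False
    define \<eta>0 where "\<eta>0 = \<tau>'(v := \<sigma> v)"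
    have "(\<Sum>\<eta>\<in>fib \<tau>'. glauber_rate p V \<sigma> \<eta> * X)
        = (\<Sum>\<eta>\<in>fib \<tau>'. if \<eta> = \<eta>0 then glauber_rate p V' (rs \<sigma>) \<tau>' * X else 0)"
    proof (rule sum.cong[OF refl])
      fix \<eta> assume \<eta>: "\<eta> \<in> fib \<tau>'"
      show "glauber_rate p V \<sigma> \<eta> * X = (if \<eta> = \<eta>0 then glauber_rate p V' (rs \<sigma>) \<tau>' * X else 0)"
      proof (cases "\<eta> = \<eta>0")
        case True thus ?thesis unfolding \<eta>0_def using rate_eq0[OF \<sigma> \<tau>'] by simp
      next
        case False2: False
        thus ?thesis using rate_zero_off[OF \<sigma> \<tau>' False \<eta>] unfolding \<eta>0_def by simp
      qed
    qed
    also have "\<dots> = (if \<eta>0 \<in> fib \<tau>' then glauber_rate p V' (rs \<sigma>) \<tau>' * X else 0)"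
      using finF by (simp add: sum.delta')
    also have "\<dots> \<le> glauber_rate p V' (rs \<sigma>) \<tau>' * X"
    proof -
      have "glauber_rate p V' (rs \<sigma>) \<tau>' \<ge> 0" by (rule rate_nonneg) (use p_pos in force)
      thus ?thesis unfolding X_def by simp
    qed
    finally show ?thesis .
  qed
  finally show ?thesis unfolding X_def .
qed

lemma grp: "(\<Sum>\<eta>\<in>\<Omega>A. f \<eta>) = (\<Sum>\<tau>'\<in>\<Omega>B. \<Sum>\<eta>\<in>fib \<tau>'. (f \<eta> :: real))"
proof -
  have "rs ` \<Omega>A \<subseteq> \<Omega>B" using rs_B by auto
  from sum.group[OF finA finB this, of f] show ?thesis unfolding fib_def by simp
qed

lemma dir_lift: "dir p V \<Omega>A (\<lambda>\<sigma>. h (rs \<sigma>)) \<le> real cc * dir p V' \<Omega>B h"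
proof -
  have "dir p V \<Omega>A (\<lambda>\<sigma>. h (rs \<sigma>)) =
    (\<Sum>\<sigma>\<in>\<Omega>A. \<Sum>\<tau>'\<in>\<Omega>B. \<Sum>\<eta>\<in>fib \<tau>'. glauber_rate p V \<sigma> \<eta> * (h (rs \<sigma>) - h (rs \<eta>))^2)"
    unfolding dir_def by (intro sum.cong refl grp)
  also have "\<dots> \<le> (\<Sum>\<sigma>\<in>\<Omega>A. \<Sum>\<tau>'\<in>\<Omega>B. glauber_rate p V' (rs \<sigma>) \<tau>' * (h (rs \<sigma>) - h \<tau>')^2)"
    by (intro sum_mono claim)
  also have "\<dots> = real cc * (\<Sum>\<tau>\<in>\<Omega>B. \<Sum>\<tau>'\<in>\<Omega>B. glauber_rate p V' \<tau> \<tau>' * (h \<tau> - h \<tau>')^2)"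
    by (rule sum_lift)
  finally show ?thesis unfolding dir_def .
qed

end

theorem proposition9:
  fixes n k v :: nat and E :: "nat \<Rightarrow> nat \<Rightarrow> bool" and p :: "nat \<Rightarrow> real"
  assumes sym: "\<And>x y. E x y \<Longrightarrow> E y x"
    and irrefl: "\<And>x. \<not> E x x"
    and in_V: "\<And>x y. E x y \<Longrightarrow> x < n \<and> y < n"
    and k_pos: "0 < k"
    and v_in: "v < n"
    and clique: "is_clique E (neighbourhood E {0..<n} v)"
    and clique_size: "card (neighbourhood E {0..<n} v) + 2 \<le> k"
    and p_pos: "\<And>i. i < n \<Longrightarrow> 0 < p i"
  shows "relaxation_time (\<lambda>x y. E x y \<and> x \<noteq> v \<and> y \<noteq> v) ({0..<n} - {v}) k p
           \<le> relaxation_time E {0..<n} k p"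
proof -
  interpret S: setting n k v E p
    by (rule setting.intro) (use sym irrefl in_V k_pos v_in clique clique_size p_pos in auto)
  define E' where "E' = (\<lambda>x y. E x y \<and> x \<noteq> v \<and> y \<noteq> v)"
  define V where "V = {0..<n}"
  define V' where "V' = {0..<n} - {v}"
  have fV: "finite V" and fV': "finite V'" unfolding V_def V'_def by auto
  define xsA where "xsA = state_list E V k"
  define xsB where "xsB = state_list E' V' k"
  define gA where "gA = (\<lambda>\<sigma> \<eta>. - glauber_generator E V k p \<sigma> \<eta>)"
  define gB where "gB = (\<lambda>\<sigma> \<eta>. - glauber_generator E' V' k p \<sigma> \<eta>)"
  define \<Omega>A where "\<Omega>A = proper_colourings E V k"
  define \<Omega>B where "\<Omega>B = proper_colourings E' V' k"
  have dA: "distinct xsA" and sA: "set xsA = \<Omega>A"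
    unfolding xsA_def \<Omega>A_def using state_list_props[OF fV] by auto
  have dB: "distinct xsB" and sB: "set xsB = \<Omega>B"
    unfolding xsB_def \<Omega>B_def using state_list_props[OF fV'] by auto
  have lA: "length xsA = card \<Omega>A" unfolding xsA_def \<Omega>A_def by (rule length_state_list[OF fV])
  have lB: "length xsB = card \<Omega>B" unfolding xsB_def \<Omega>B_def by (rule length_state_list[OF fV'])
  define gapA where "gapA = glauber_gap E V k p"
  define gapB where "gapB = glauber_gap E' V' k p"
  have gapA: "gapA = sorted_eigenvalues (kmat xsA gA) ! 1" unfolding gapA_def xsA_def gA_def by (rule gap_kmat)
  have gapB: "gapB = sorted_eigenvalues (kmat xsB gB) ! 1" unfolding gapB_def xsB_def gB_def by (rule gap_kmat)
  have pV: "\<And>x. x \<in> V \<Longrightarrow> p x \<ge> 0" unfolding V_def using p_pos by (simp add: less_imp_le)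
  have pV': "\<And>x. x \<in> V' \<Longrightarrow> p x \<ge> 0" unfolding V'_def using p_pos by (simp add: less_imp_le)
  have symA: "\<And>\<sigma> \<eta>. gA \<sigma> \<eta> = gA \<eta> \<sigma>" unfolding gA_def by (rule gg_sym[OF fV])
  have symB: "\<And>\<sigma> \<eta>. gB \<sigma> \<eta> = gB \<eta> \<sigma>" unfolding gB_def by (rule gg_sym[OF fV'])
  have psdA: "\<And>h. qf (set xsA) gA h \<ge> 0" unfolding sA \<Omega>A_def gA_def qf_dir[OF fV]
    using dir_nonneg[OF fV pV] by simp
  have psdB: "\<And>h. qf (set xsB) gB h \<ge> 0" unfolding sB \<Omega>B_def gB_def qf_dir[OF fV']
    using dir_nonneg[OF fV' pV'] by simp
  have rowsA: "\<And>\<sigma>. \<sigma> \<in> set xsA \<Longrightarrow> (\<Sum>\<eta>\<in>set xsA. gA \<sigma> \<eta>) = 0"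
    unfolding sA \<Omega>A_def gA_def by (rule gg_rows[OF fV])
  have cardA: "card \<Omega>A = S.cc * card \<Omega>B" unfolding \<Omega>A_def \<Omega>B_def V_def V'_def E'_def by (rule S.card_A)
  have cc2: "S.cc \<ge> 2" by (rule S.cc_ge2)
  have nonnegA: "0 \<le> relaxation_time E V k p"
  proof -
    have "0 \<le> gapA" if "2 \<le> card \<Omega>A"
      unfolding gapA by (rule fun_gap_nonneg[OF dA _ symA psdA]) (use that lA in simp)
    thus ?thesis unfolding relaxation_time_def gapA_def[symmetric] \<Omega>A_def[symmetric] by auto
  qed
  show ?thesis
  proof (cases "card \<Omega>B < 2")
    case True
    hence "relaxation_time E' V' k p = 0" unfolding relaxation_time_def \<Omega>B_def by simp
    hence "relaxation_time E' V' k p \<le> relaxation_time E V k p" using nonnegA by simp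
    thus ?thesis unfolding E'_def V'_def V_def .
  next
    case False
    hence NB: "2 \<le> card \<Omega>B" by simp
    have NA: "2 \<le> card \<Omega>A" using cardA NB cc2
      by (metis le_trans mult_le_mono2 nat_mult_1 one_le_numeral le_numeral_extra(4) mult_le_mono1 mult.commute)
    have gA0: "0 \<le> gapA" unfolding gapA by (rule fun_gap_nonneg[OF dA _ symA psdA]) (use NA lA in simp)
    obtain h where h1: "(\<Sum>\<sigma>\<in>set xsB. h \<sigma>) = 0" and h2: "\<exists>\<sigma>\<in>set xsB. h \<sigma> \<noteq> 0"
      and h3: "qf (set xsB) gB h \<le> gapB * (\<Sum>\<sigma>\<in>set xsB. (h \<sigma>)^2)"
    proof -
      have "2 \<le> length xsB" using NB lB by simp
      from fun_gap_witness[where g=gB, OF dB this symB] show ?thesis using that unfolding gapB by blast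
    qed
    define F where "F = (\<lambda>\<sigma>. h (S.rs \<sigma>))"
    have liftsum: "(\<Sum>\<sigma>\<in>\<Omega>A. \<Phi> (S.rs \<sigma>)) = real S.cc * (\<Sum>\<tau>\<in>\<Omega>B. \<Phi> \<tau>)" for \<Phi> :: "_ \<Rightarrow> real"
      unfolding \<Omega>A_def \<Omega>B_def V_def V'_def E'_def by (rule S.sum_lift)
    have F1: "(\<Sum>\<sigma>\<in>set xsA. F \<sigma>) = 0" unfolding sA F_def liftsum using h1 sB by simp
    have F2: "\<exists>\<sigma>\<in>set xsA. F \<sigma> \<noteq> 0"
    proof -
      obtain \<tau> where \<tau>: "\<tau> \<in> \<Omega>B" and h\<tau>: "h \<tau> \<noteq> 0" using h2 sB by auto
      have "card (S.fib \<tau>) = S.cc" using \<tau> unfolding \<Omega>B_def V'_def E'_def by (rule S.fib_card)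
      hence "S.fib \<tau> \<noteq> {}" using cc2 by auto
      then obtain \<sigma> where "\<sigma> \<in> S.fib \<tau>" by auto
      hence "\<sigma> \<in> \<Omega>A" "S.rs \<sigma> = \<tau>" unfolding S.fib_def \<Omega>A_def V_def by auto
      thus ?thesis using h\<tau> sA unfolding F_def by auto
    qed
    have low: "gapA * (\<Sum>\<sigma>\<in>set xsA. (F \<sigma>)^2) \<le> qf (set xsA) gA F"
      unfolding gapA by (rule fun_gap_lower[OF dA _ symA psdA rowsA F1 F2]) (use NA lA in simp)
    have "qf (set xsA) gA F = dir p V \<Omega>A F / 2" unfolding sA \<Omega>A_def gA_def by (rule qf_dir[OF fV])
    also have "dir p V \<Omega>A F \<le> real S.cc * dir p V' \<Omega>B h"
      unfolding F_def \<Omega>A_def \<Omega>B_def V_def V'_def E'_def by (rule S.dir_lift)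
    hence "dir p V \<Omega>A F / 2 \<le> real S.cc * (dir p V' \<Omega>B h / 2)" by simp
    also have "dir p V' \<Omega>B h / 2 = qf (set xsB) gB h" unfolding sB \<Omega>B_def gB_def by (rule qf_dir[OF fV', symmetric])
    finally have "qf (set xsA) gA F \<le> real S.cc * qf (set xsB) gB h" by simp
    also have "\<dots> \<le> real S.cc * (gapB * (\<Sum>\<sigma>\<in>set xsB. (h \<sigma>)^2))"
      using h3 by (intro mult_left_mono) auto
    finally have up: "gapA * (\<Sum>\<sigma>\<in>set xsA. (F \<sigma>)^2) \<le> real S.cc * (gapB * (\<Sum>\<sigma>\<in>set xsB. (h \<sigma>)^2))"
      using low by linarith
    have sq: "(\<Sum>\<sigma>\<in>set xsA. (F \<sigma>)^2) = real S.cc * (\<Sum>\<sigma>\<in>set xsB. (h \<sigma>)^2)"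
      unfolding sA sB F_def by (rule liftsum)
    have Spos: "(\<Sum>\<sigma>\<in>set xsB. (h \<sigma>)^2) > 0"
    proof -
      obtain \<tau> where \<tau>: "\<tau> \<in> set xsB" and h\<tau>: "h \<tau> \<noteq> 0" using h2 by auto
      have "(h \<tau>)^2 \<le> (\<Sum>\<sigma>\<in>set xsB. (h \<sigma>)^2)"
        by (rule member_le_sum) (use \<tau> in auto)
      moreover have "(h \<tau>)^2 > 0" using h\<tau> by simp
      ultimately show ?thesis by linarith
    qed
    have "(real S.cc * (\<Sum>\<sigma>\<in>set xsB. (h \<sigma>)^2)) * gapA \<le> (real S.cc * (\<Sum>\<sigma>\<in>set xsB. (h \<sigma>)^2)) * gapB"
      using up unfolding sq by (simp add: algebra_simps)
    moreover have "real S.cc * (\<Sum>\<sigma>\<in>set xsB. (h \<sigma>)^2) > 0" using Spos cc2 by simp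
    ultimately have le: "gapA \<le> gapB" by (rule mult_left_le_imp_le)
    have tA: "relaxation_time E V k p = (if gapA = 0 then \<infinity> else ereal (1 / gapA))"
      unfolding relaxation_time_def gapA_def[symmetric] \<Omega>A_def[symmetric] using NA by simp
    have tB: "relaxation_time E' V' k p = (if gapB = 0 then \<infinity> else ereal (1 / gapB))"
      unfolding relaxation_time_def gapB_def[symmetric] \<Omega>B_def[symmetric] using NB by simp
    have "relaxation_time E' V' k p \<le> relaxation_time E V k p"
    proof (cases "gapA = 0")
      case True thus ?thesis unfolding tA by simp
    next
      case False
      hence pA: "gapA > 0" using gA0 by simp
      hence "gapB > 0" using le by simp
      moreover have "1 / gapB \<le> 1 / gapA" using pA le by (simp add: frac_le)
      ultimately show ?thesis unfolding tA tB using False by simp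
    qed
    thus ?thesis unfolding E'_def V'_def V_def .
  qed
qed

end
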